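(* Let $\mathcal A$ be a unital $C^*$-algebra and $\mathcal F\subseteq\mathcal A$ an algebra of finite type elements. Let $p,q\in\mathcal F$ be projections, let $a\in\mathcal A$ be invertible up to $(p,q)$ with $qa(1-p)=0$, and let $(p_\alpha)$ be an approximate unit for $\mathcal F$ consisting of projections with $p_\alpha\ge p$ for all $\alpha$. Then there exists an approximate unit $(q_\alpha)$ for $\mathcal F$ consisting of projections (indexed by the same directed set) such that for all $\alpha$: $q_\alpha-q$ is a projection with $q_\alpha-q\sim p_\alpha-p$, $a$ is invertible up to $(p_\alpha,q_\alpha)$, and $$(1-q_\alpha)a(p_\alpha-p)=0.$$
   Context: Let $\mathcal A$ be a unital $C^*$-algebra. A subalgebra $\mathcal F\subseteq\mathcal A$ is an algebra of finite type elements if: (i) $\mathcal F$ is a self-adjoint two-sided ideal of $\mathcal A$; (ii) $\mathcal F$ has an approximate unit consisting of projections, where an approximate unit consisting of projections is a net $(p_\alpha)$ of projections in $\mathcal F$ with $\|f-p_\alpha f\|\to0$ and $\|f-fp_\alpha\|\to0$ for every $f\in\mathcal F$; (iii) for any projections $p,q\in\mathcal F$ there is $v\in\mathcal A$ with $vv^*=q$ and $v^*vp=0$. Projections $p,q$ are equivalent, $p\sim q$, if there is $v\in\mathcal A$ with $vv^*=p$, $v^*v=q$. For $a\in\mathcal A$ and projections $p,q\in\mathcal A$, $a$ is invertible up to $(p,q)$ if there is $b\in\mathcal A$ with $b=(1-p)b(1-q)$, $(1-q)a(1-p)b=1-q$ and $b(1-q)a(1-p)=1-p$. *)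

theory Defs
  imports "HOL-Analysis.Analysis"
begin

text \<open>Unital C*-algebras: a unital complex Banach algebra (the real normed algebra
structure of the type together with a complex scalar multiplication extending
the real one) with an involution satisfying the C*-identity.\<close>

locale unital_cstar_algebra =
  fixes star :: "'a::{real_normed_algebra_1, banach} \<Rightarrow> 'a"
    and cscale :: "complex \<Rightarrow> 'a \<Rightarrow> 'a"
  assumes cscale_one: "cscale 1 x = x"
    and cscale_assoc: "cscale (c * d) x = cscale c (cscale d x)"
    and cscale_add_left: "cscale (c + d) x = cscale c x + cscale d x"
    and cscale_add_right: "cscale c (x + y) = cscale c x + cscale c y"
    and cscale_of_real: "cscale (complex_of_real r) x = scaleR r x"
    and cscale_mult_left: "cscale c (x * y) = cscale c x * y"
    and cscale_mult_right: "cscale c (x * y) = x * cscale c y"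
    and norm_cscale: "norm (cscale c x) = cmod c * norm x"
    and star_star: "star (star x) = x"
    and star_add: "star (x + y) = star x + star y"
    and star_cscale: "star (cscale c x) = cscale (cnj c) (star x)"
    and star_mult: "star (x * y) = star y * star x"
    and cstar_identity: "norm (star x * x) = (norm x)\<^sup>2"

definition is_proj :: "('a::ring \<Rightarrow> 'a) \<Rightarrow> 'a \<Rightarrow> bool" where
  "is_proj star p \<longleftrightarrow> p * p = p \<and> star p = p"

definition invertible_el :: "'a::ring_1 \<Rightarrow> bool" where
  "invertible_el x \<longleftrightarrow> (\<exists>y. x * y = 1 \<and> y * x = 1)"

definition positive_el :: "('a::ring_1 \<Rightarrow> 'a) \<Rightarrow> (complex \<Rightarrow> 'a \<Rightarrow> 'a) \<Rightarrow> 'a \<Rightarrow> bool" where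
  "positive_el star cscale x \<longleftrightarrow> star x = x \<and>
     (\<forall>z. \<not> invertible_el (x - cscale z 1) \<longrightarrow> Im z = 0 \<and> Re z \<ge> 0)"

definition cstar_le :: "('a::ring_1 \<Rightarrow> 'a) \<Rightarrow> (complex \<Rightarrow> 'a \<Rightarrow> 'a) \<Rightarrow> 'a \<Rightarrow> 'a \<Rightarrow> bool" where
  "cstar_le star cscale x y \<longleftrightarrow> positive_el star cscale (y - x)"

definition proj_equiv :: "('a::ring \<Rightarrow> 'a) \<Rightarrow> 'a \<Rightarrow> 'a \<Rightarrow> bool" where
  "proj_equiv star p q \<longleftrightarrow> (\<exists>v. v * star v = p \<and> star v * v = q)"

definition invertible_upto :: "'a::ring_1 \<Rightarrow> 'a \<Rightarrow> 'a \<Rightarrow> bool" where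
  "invertible_upto a p q \<longleftrightarrow> (\<exists>b. b = (1 - p) * b * (1 - q) \<and>
      (1 - q) * a * (1 - p) * b = 1 - q \<and> b * (1 - q) * a * (1 - p) = 1 - p)"

definition directed_set :: "'i set \<Rightarrow> ('i \<Rightarrow> 'i \<Rightarrow> bool) \<Rightarrow> bool" where
  "directed_set I le \<longleftrightarrow> I \<noteq> {} \<and> (\<forall>i\<in>I. le i i) \<and>
     (\<forall>i\<in>I. \<forall>j\<in>I. \<forall>k\<in>I. le i j \<longrightarrow> le j k \<longrightarrow> le i k) \<and>
     (\<forall>i\<in>I. \<forall>j\<in>I. \<exists>k\<in>I. le i k \<and> le j k)"

definition approx_unit_proj ::
  "('a::real_normed_algebra \<Rightarrow> 'a) \<Rightarrow> 'a set \<Rightarrow> 'i set \<Rightarrow> ('i \<Rightarrow> 'i \<Rightarrow> bool) \<Rightarrow> ('i \<Rightarrow> 'a) \<Rightarrow> bool" where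
  "approx_unit_proj star F I le P \<longleftrightarrow>
     (\<forall>\<alpha>\<in>I. P \<alpha> \<in> F \<and> is_proj star (P \<alpha>)) \<and>
     (\<forall>f\<in>F. \<forall>\<epsilon>>0. \<exists>\<alpha>0\<in>I. \<forall>\<alpha>\<in>I. le \<alpha>0 \<alpha> \<longrightarrow>
         norm (f - P \<alpha> * f) < \<epsilon> \<and> norm (f - f * P \<alpha>) < \<epsilon>)"

definition sa_ideal :: "('a::ring \<Rightarrow> 'a) \<Rightarrow> (complex \<Rightarrow> 'a \<Rightarrow> 'a) \<Rightarrow> 'a set \<Rightarrow> bool" where
  "sa_ideal star cscale F \<longleftrightarrow> 0 \<in> F \<and>
     (\<forall>x\<in>F. \<forall>y\<in>F. x + y \<in> F) \<and>
     (\<forall>c. \<forall>x\<in>F. cscale c x \<in> F) \<and>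
     (\<forall>x\<in>F. \<forall>a. a * x \<in> F \<and> x * a \<in> F) \<and>
     (\<forall>x\<in>F. star x \<in> F)"

definition finite_type_algebra ::
  "('a::{real_normed_algebra_1} \<Rightarrow> 'a) \<Rightarrow> (complex \<Rightarrow> 'a \<Rightarrow> 'a) \<Rightarrow> 'a set \<Rightarrow> bool" where
  "finite_type_algebra star cscale F \<longleftrightarrow>
     sa_ideal star cscale F \<and>
     (\<exists>(I::'a set set) le P. directed_set I le \<and> approx_unit_proj star F I le P) \<and>
     (\<forall>p\<in>F. \<forall>q\<in>F. is_proj star p \<longrightarrow> is_proj star q \<longrightarrow>
        (\<exists>v. v * star v = q \<and> star v * v * p = 0))"

end

theory Submission
  imports Defs "HOL-Computational_Algebra.Formal_Power_Series"
begin

context unital_cstar_algebra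
begin

lemma cscale_zero_left[simp]: "cscale 0 x = 0"
  using cscale_of_real[of 0 x] by simp

lemma cscale_zero_right[simp]: "cscale c 0 = 0"
  using cscale_add_right[of c 0 0] by simp

lemma cscale_minus_left: "cscale (- c) x = - cscale c x"
  using cscale_add_left[of c "-c" x] by (simp add: eq_neg_iff_add_eq_0 add.commute)

lemma cscale_minus_right: "cscale c (- x) = - cscale c x"
  using cscale_add_right[of c x "-x"] by (simp add: eq_neg_iff_add_eq_0 add.commute)

lemma cscale_diff_left: "cscale (c - d) x = cscale c x - cscale d x"
  using cscale_add_left[of c "-d" x] by (simp add: cscale_minus_left)

lemma cscale_diff_right: "cscale c (x - y) = cscale c x - cscale c y"
  using cscale_add_right[of c x "-y"] by (simp add: cscale_minus_right)

lemma cscale_scaleR: "scaleR r x = cscale (complex_of_real r) x"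
  by (simp add: cscale_of_real)

lemma cscale_mult: "cscale c x * cscale d y = cscale (c * d) (x * y)"
  by (metis cscale_assoc cscale_mult_left cscale_mult_right mult.commute)

lemma cscale_1_mult: "cscale c 1 * x = cscale c x"
  by (metis cscale_mult_left mult_1_left)

lemma mult_cscale_1: "x * cscale c 1 = cscale c x"
  by (metis cscale_mult_right mult_1_right)

lemma cscale_1_comm: "cscale c 1 * x = x * cscale c 1"
  by (simp add: cscale_1_mult mult_cscale_1)

lemma cscale_sum_left: "cscale (sum f A) x = (\<Sum>k\<in>A. cscale (f k) x)"
  by (induct A rule: infinite_finite_induct) (auto simp: cscale_add_left)

lemma cscale_sum_right: "cscale c (sum f A) = (\<Sum>k\<in>A. cscale c (f k))"
  by (induct A rule: infinite_finite_induct) (auto simp: cscale_add_right)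

lemma cscale_power: "(cscale c x) ^ n = cscale (c ^ n) (x ^ n)"
  by (induct n) (auto simp: cscale_one cscale_mult)

lemma cscale_1_one[simp]: "cscale 1 x = x" by (rule cscale_one)

lemma star_zero[simp]: "star 0 = 0"
  using star_add[of 0 0] by simp

lemma star_one[simp]: "star 1 = 1"
proof -
  have "star 1 = star 1 * star (star 1)" by (simp add: star_star)
  also have "\<dots> = star (star 1 * 1)" by (rule star_mult[symmetric])
  also have "\<dots> = 1" by (simp add: star_star)
  finally show ?thesis .
qed

lemma star_minus: "star (- x) = - star x"
  using star_add[of x "-x"] by (simp add: eq_neg_iff_add_eq_0 add.commute)

lemma star_diff: "star (x - y) = star x - star y"
  using star_add[of x "-y"] by (simp add: star_minus)

lemma star_scaleR: "star (scaleR r x) = scaleR r (star x)"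
  by (simp add: cscale_scaleR star_cscale)

lemma star_cscale1: "star (cscale c 1) = cscale (cnj c) 1"
  by (simp add: star_cscale)

lemma norm_star[simp]: "norm (star x) = norm x"
proof -
  have le: "norm y \<le> norm (star y)" for y
  proof (cases "norm y = 0")
    case False
    have "(norm y)^2 = norm (star y * y)" by (simp add: cstar_identity)
    also have "\<dots> \<le> norm (star y) * norm y" by (rule norm_mult_ineq)
    finally show ?thesis using False by (simp add: power2_eq_square)
  qed simp
  show ?thesis using le[of x] le[of "star x"] by (simp add: star_star)
qed

lemma star_power: "star (x ^ n) = (star x) ^ n"
  by (induct n) (auto simp: star_mult power_commutes)

lemma star_sum: "star (sum f A) = (\<Sum>k\<in>A. star (f k))"
  by (induct A rule: infinite_finite_induct) (auto simp: star_add)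

lemma bounded_linear_star: "bounded_linear star"
  by (rule bounded_linear_intro[where K=1]) (auto simp: star_add star_scaleR)

lemma star_suminf: "summable f \<Longrightarrow> star (suminf f) = (\<Sum>n. star (f n))"
  by (rule bounded_linear.suminf[OF bounded_linear_star])

lemma star_inj: "star x = star y \<Longrightarrow> x = y"
  by (metis star_star)

lemma star_eq_0: "star x = 0 \<longleftrightarrow> x = 0"
  by (metis star_star star_zero)

lemma norm_sq_sa: "star x = x \<Longrightarrow> norm (x * x) = (norm x)^2"
  using cstar_identity[of x] by simp

lemma norm_star_mult_self: "norm (star x * x) = 0 \<longleftrightarrow> x = 0"
  by (simp add: cstar_identity)

lemma proj_norm_le1:
  assumes "is_proj star p" shows "norm p \<le> 1"
proof -
  have "(norm p)^2 = norm p" using cstar_identity[of p] assms by (simp add: is_proj_def)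
  then have "norm p = 0 \<or> norm p = 1" by (simp add: power2_eq_square)
  then show ?thesis by auto
qed

end

definition ainv :: "'a::ring_1 \<Rightarrow> 'a" where
  "ainv x = (SOME y. x * y = 1 \<and> y * x = 1)"

lemma invertible_elI: "x * y = 1 \<Longrightarrow> y * x = 1 \<Longrightarrow> invertible_el x"
  unfolding invertible_el_def by blast

lemma ainv: assumes "invertible_el x" shows "x * ainv x = 1" "ainv x * x = 1"
  using someI_ex[OF assms[unfolded invertible_el_def]] unfolding ainv_def by auto

lemma inv_unique: fixes x :: "'a::ring_1"
  assumes "x * y = 1" "z * x = 1" shows "y = z"
proof -
  have "y = (z * x) * y" using assms by simp
  also have "\<dots> = z" by (metis assms(1) mult.assoc mult_1_right)
  finally show ?thesis .
qed

lemma ainv_eq: fixes x :: "'a::ring_1"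
  assumes "x * y = 1" "y * x = 1" shows "ainv x = y"
proof -
  have i: "invertible_el x" using assms by (rule invertible_elI)
  show ?thesis using inv_unique[OF ainv(1)[OF i] assms(2)] .
qed

lemma invertible_one[simp]: "invertible_el (1::'a::ring_1)"
  by (rule invertible_elI[of _ 1]) auto

lemma invertible_mult:
  fixes x y :: "'a::ring_1"
  assumes "invertible_el x" "invertible_el y" shows "invertible_el (x * y)"
proof (rule invertible_elI[of _ "ainv y * ainv x"])
  have "x * y * (ainv y * ainv x) = x * (y * ainv y) * ainv x" by (simp add: mult.assoc)
  then show "x * y * (ainv y * ainv x) = 1" by (simp add: ainv assms)
  have "ainv y * ainv x * (x * y) = ainv y * (ainv x * x) * y" by (simp add: mult.assoc)
  then show "ainv y * ainv x * (x * y) = 1" by (simp add: ainv assms)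
qed

lemma ainv_mult:
  fixes x y :: "'a::ring_1"
  assumes "invertible_el x" "invertible_el y" shows "ainv (x * y) = ainv y * ainv x"
proof (rule ainv_eq)
  have "x * y * (ainv y * ainv x) = x * (y * ainv y) * ainv x" by (simp add: mult.assoc)
  then show "x * y * (ainv y * ainv x) = 1" by (simp add: ainv assms)
  have "ainv y * ainv x * (x * y) = ainv y * (ainv x * x) * y" by (simp add: mult.assoc)
  then show "ainv y * ainv x * (x * y) = 1" by (simp add: ainv assms)
qed

lemma invertible_ainv: "invertible_el x \<Longrightarrow> invertible_el (ainv x)"
  using ainv by (metis invertible_elI)

lemma ainv_ainv: "invertible_el x \<Longrightarrow> ainv (ainv x) = x"
  using ainv by (metis ainv_eq)

lemma comm_ainv:
  fixes x y :: "'a::ring_1"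
  assumes "invertible_el x" "y * x = x * y" shows "y * ainv x = ainv x * y"
proof -
  have "y * ainv x = ainv x * x * y * ainv x" using ainv(2)[OF assms(1)] by simp
  also have "\<dots> = ainv x * (x * y) * ainv x" by (simp add: mult.assoc)
  also have "\<dots> = ainv x * (y * x) * ainv x" using assms(2) by simp
  also have "\<dots> = ainv x * y * (x * ainv x)" by (simp add: mult.assoc)
  finally show ?thesis using ainv(1)[OF assms(1)] by simp
qed

lemma invertible_comm_factor:
  fixes x y :: "'a::ring_1"
  assumes "x * y = y * x" "invertible_el (x * y)"
  shows "invertible_el x" "invertible_el y"
proof -
  let ?w = "ainv (x * y)"
  have cx: "x * ?w = ?w * x"
    by (rule comm_ainv[OF assms(2)]) (simp add: assms(1) mult.assoc[symmetric])
  have cy: "y * ?w = ?w * y"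
    by (rule comm_ainv[OF assms(2)]) (simp add: assms(1) mult.assoc)
  have "x * (y * ?w) = 1" using ainv(1)[OF assms(2)] by (simp add: mult.assoc)
  moreover have "(y * ?w) * x = 1"
    using ainv(1)[OF assms(2)] cx assms(1) by (metis mult.assoc)
  ultimately show "invertible_el x" by (rule invertible_elI)
  have "y * (x * ?w) = 1" using ainv(1)[OF assms(2)] assms(1) by (metis mult.assoc)
  moreover have "(x * ?w) * y = 1"
    using ainv(1)[OF assms(2)] cy by (metis mult.assoc)
  ultimately show "invertible_el y" by (rule invertible_elI)
qed

lemma invertible_minus: "invertible_el (x::'a::ring_1) \<Longrightarrow> invertible_el (- x)"
  by (metis ainv invertible_elI minus_mult_minus)

lemma invertible_minus_iff: "invertible_el (- (x::'a::ring_1)) \<longleftrightarrow> invertible_el x"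
  by (metis invertible_minus minus_minus)

lemma jacobson:
  fixes x y :: "'a::ring_1"
  assumes "invertible_el (1 - x * y)" shows "invertible_el (1 - y * x)"
proof -
  let ?w = "ainv (1 - x * y)"
  have a: "(1 - x*y) * ?w = 1" "?w * (1 - x*y) = 1" using ainv assms by auto
  show ?thesis
  proof (rule invertible_elI[of _ "1 + y * ?w * x"])
    have "(1 - y * x) * (1 + y * ?w * x) = 1 - y * x + y * ((1 - x*y) * ?w) * x"
      by (simp add: algebra_simps mult.assoc)
    then show "(1 - y * x) * (1 + y * ?w * x) = 1" using a by simp
    have "(1 + y * ?w * x) * (1 - y * x) = 1 - y * x + y * (?w * (1 - x*y)) * x"
      by (simp add: algebra_simps mult.assoc)
    then show "(1 + y * ?w * x) * (1 - y * x) = 1" using a by simp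
  qed
qed

section \<open>Neumann series\<close>

lemma neumann:
  fixes u :: "'a::{real_normed_algebra_1, banach}"
  assumes u: "norm u < 1"
  shows "invertible_el (1 - u)" "norm (ainv (1 - u)) \<le> 1 / (1 - norm u)"
        "norm (ainv (1 - u) - 1) \<le> norm u / (1 - norm u)"
proof -
  have nb: "norm (u ^ n) \<le> norm u ^ n" for n by (rule norm_power_ineq)
  have sg: "summable (\<lambda>n. norm u ^ n)" using u by (simp add: summable_geometric)
  have sn: "summable (\<lambda>n. norm (u ^ n))"
    by (rule summable_comparison_test[OF _ sg]) (auto intro: nb)
  have s: "summable (\<lambda>n. u ^ n)" using sn by (rule summable_norm_cancel)
  let ?S = "\<Sum>n. u ^ n"
  have lim0: "(\<lambda>n. u ^ n) \<longlonglongrightarrow> 0"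
  proof (rule tendsto_norm_zero_cancel, rule Lim_null_comparison[OF _ LIMSEQ_power_zero[of "norm u"]])
    show "\<forall>\<^sub>F n in sequentially. norm (norm (u ^ n)) \<le> norm u ^ n" using nb by simp
  qed (use u in auto)
  have tel: "(\<lambda>n. u ^ n - u ^ Suc n) sums 1"
    using telescope_sums'[OF lim0] by simp
  have "(1 - u) * ?S = (\<Sum>n. (1 - u) * u ^ n)" by (rule suminf_mult[OF s, symmetric])
  also have "\<dots> = (\<Sum>n. u ^ n - u ^ Suc n)" by (simp add: algebra_simps)
  also have "\<dots> = 1" using tel by (simp add: sums_iff)
  finally have r: "(1 - u) * ?S = 1" .
  have "?S * (1 - u) = (\<Sum>n. u ^ n * (1 - u))" by (rule suminf_mult2[OF s])
  also have "\<dots> = (\<Sum>n. u ^ n - u ^ Suc n)" by (simp add: algebra_simps power_commutes)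
  also have "\<dots> = 1" using tel by (simp add: sums_iff)
  finally have l: "?S * (1 - u) = 1" .
  show inv: "invertible_el (1 - u)" using r l by (rule invertible_elI)
  have eq: "ainv (1 - u) = ?S" using r l by (rule ainv_eq)
  have "norm ?S \<le> (\<Sum>n. norm (u ^ n))" by (rule summable_norm[OF sn])
  also have "\<dots> \<le> (\<Sum>n. norm u ^ n)" by (rule suminf_le[OF nb sn sg])
  also have "\<dots> = 1 / (1 - norm u)" using u by (simp add: suminf_geometric)
  finally show "norm (ainv (1 - u)) \<le> 1 / (1 - norm u)" using eq by simp
  have sn1: "summable (\<lambda>n. norm (u ^ Suc n))" using sn by (rule summable_Suc_iff[THEN iffD2])
  have sg1: "summable (\<lambda>n. norm u ^ Suc n)" using sg by (rule summable_Suc_iff[THEN iffD2])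
  have "?S - 1 = (\<Sum>n. u ^ Suc n)" using suminf_split_head[OF s] by simp
  then have "norm (?S - 1) \<le> (\<Sum>n. norm (u ^ Suc n))" using summable_norm[OF sn1] by simp
  also have "\<dots> \<le> (\<Sum>n. norm u ^ Suc n)" by (rule suminf_le[OF _ sn1 sg1]) (rule nb)
  also have "\<dots> = norm u / (1 - norm u)"
    using u suminf_geometric[of "norm u"] suminf_mult[OF sg, of "norm u"] by simp
  finally show "norm (ainv (1 - u) - 1) \<le> norm u / (1 - norm u)" using eq by simp
qed

lemma perturb:
  fixes y d :: "'a::{real_normed_algebra_1, banach}"
  assumes y: "invertible_el y" and small: "norm d * norm (ainv y) < 1"
  shows "invertible_el (y - d)" "norm (ainv (y - d)) \<le> norm (ainv y) / (1 - norm d * norm (ainv y))"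
proof -
  let ?u = "ainv y * d"
  have nu: "norm ?u \<le> norm d * norm (ainv y)"
    using norm_mult_ineq[of "ainv y" d] by (simp add: mult.commute)
  then have nu1: "norm ?u < 1" using small by simp
  have eq: "y - d = y * (1 - ?u)" using ainv(1)[OF y] by (simp add: algebra_simps mult.assoc[symmetric])
  have i1: "invertible_el (1 - ?u)" using neumann(1)[OF nu1] .
  show "invertible_el (y - d)" unfolding eq by (rule invertible_mult[OF y i1])
  have "ainv (y - d) = ainv (1 - ?u) * ainv y" unfolding eq by (rule ainv_mult[OF y i1])
  then have "norm (ainv (y - d)) \<le> norm (ainv (1 - ?u)) * norm (ainv y)"
    by (simp add: norm_mult_ineq)
  also have "\<dots> \<le> (1 / (1 - norm ?u)) * norm (ainv y)"
    by (rule mult_right_mono[OF neumann(2)[OF nu1]]) simp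
  also have "\<dots> \<le> (1 / (1 - norm d * norm (ainv y))) * norm (ainv y)"
    by (rule mult_right_mono) (use nu small nu1 in \<open>auto intro!: divide_left_mono\<close>)
  finally show "norm (ainv (y - d)) \<le> norm (ainv y) / (1 - norm d * norm (ainv y))" by simp
qed

context unital_cstar_algebra
begin

lemma invertible_cscale1: "c \<noteq> 0 \<Longrightarrow> invertible_el (cscale c 1)"
  by (rule invertible_elI[of _ "cscale (1/c) 1"]) (auto simp: cscale_mult)

lemma invertible_cscale:
  assumes "c \<noteq> 0" "invertible_el x" shows "invertible_el (cscale c x)"
  using invertible_mult[OF invertible_cscale1[OF assms(1)] assms(2)] by (simp add: cscale_1_mult)

lemma spec_bound:
  assumes "cmod z > norm g" shows "invertible_el (g - cscale z 1)"
proof -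
  have z: "z \<noteq> 0" using assms norm_ge_zero[of g] by auto
  have n: "norm (cscale (1/z) g) < 1" using assms z by (simp add: norm_cscale norm_divide field_simps)
  have eq: "g - cscale z 1 = cscale (-z) (1 - cscale (1/z) g)"
    using z by (simp add: cscale_diff_right cscale_assoc[symmetric] cscale_minus_left)
  show ?thesis unfolding eq by (rule invertible_cscale) (use z neumann(1)[OF n] in auto)
qed

end

lemma i_mult_i: "(\<i> * x) * (\<i> * y) = - (x * (y::complex))"
proof -
  have "(\<i> * x) * (\<i> * y) = (\<i> * \<i>) * (x * y)" by (simp only: ac_simps)
  then show ?thesis by simp
qed

section \<open>Roots of unity\<close>

definition rou :: "nat \<Rightarrow> complex" where "rou n = cis (2 * pi / real n)"

lemma rou_pow_n: "n > 0 \<Longrightarrow> rou n ^ n = 1"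
  unfolding rou_def Complex.DeMoivre by simp

lemma norm_rou[simp]: "cmod (rou n) = 1" by (simp add: rou_def)

lemma norm_rou_pow[simp]: "cmod (rou n ^ k) = 1" by (simp add: norm_power)

lemma rou_pow_kn: "n > 0 \<Longrightarrow> rou n ^ (k * n) = 1"
  by (simp add: power_mult[symmetric] mult.commute[of k n] power_mult rou_pow_n)

lemma rou_sum:
  assumes n: "n > 0" and m: "m < n"
  shows "(\<Sum>k<n. (rou n ^ k) ^ m) = (if m = 0 then of_nat n else 0)"
proof (cases "m = 0")
  case False
  let ?x = "rou n ^ m"
  have x: "?x = cis (2 * pi * real m / real n)" unfolding rou_def Complex.DeMoivre by (simp add: mult.commute)
  have "cos (2 * pi * real m / real n) \<noteq> 1"
  proof
    assume "cos (2 * pi * real m / real n) = 1"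
    then obtain j :: int where j: "2 * pi * real m / real n = j * 2 * pi"
      by (auto simp: cos_one_2pi_int)
    then have "real m = j * real n" using n by (simp add: field_simps)
    then have "int m = j * int n" by (metis of_int_eq_iff of_int_mult of_int_of_nat_eq)
    moreover have "0 < int m" "int m < int n" using False m by auto
    ultimately show False
    proof (cases "j \<le> 0")
      case True
      then have "j * int n \<le> 0" by (simp add: mult_nonpos_nonneg)
      then show False using \<open>int m = j * int n\<close> \<open>0 < int m\<close> by linarith
    next
      case False
      then have "1 * int n \<le> j * int n" by (intro mult_right_mono) auto
      then show False using \<open>int m = j * int n\<close> \<open>int m < int n\<close> by linarith
    qed
  qed
  then have x1: "?x \<noteq> 1" unfolding x by (metis cis.sel(1) one_complex.sel(1))
  have xn: "?x ^ n = 1" using rou_pow_n[OF n] by (metis power_mult power_mult_distrib mult.commute power_one)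
  have "(\<Sum>k<n. (rou n ^ k) ^ m) = (\<Sum>k<n. ?x ^ k)"
    by (simp add: power_mult[symmetric] mult.commute)
  also have "\<dots> = 0" using x1 xn by (simp add: sum_gp_strict)
  finally show ?thesis using False by simp
qed simp

lemma cis_minus_1_le: "cmod (cis t - 1) \<le> \<bar>t\<bar>"
proof -
  have "(cmod (cis t - 1))^2 = (cos t - 1)^2 + (sin t)^2" by (simp add: cmod_power2)
  also have "\<dots> = 2 - 2 * cos t" by (simp add: power2_eq_square algebra_simps sin_squared_eq)
  also have "\<dots> = 4 * (sin (t/2))^2" using cos_double_sin[of "t/2"] by simp
  also have "\<dots> \<le> 4 * (t/2)^2"
    using abs_sin_x_le_abs_x[of "t/2"] abs_le_square_iff[of "sin (t/2)" "t/2"] by simp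
  also have "\<dots> = t^2" by (simp add: power2_eq_square)
  finally show ?thesis by (simp add: abs_le_square_iff[symmetric] power2_le_iff_abs_le[symmetric])
qed

lemma rou_double_sq: "n > 0 \<Longrightarrow> rou (2 * n) ^ 2 = rou n"
  unfolding rou_def Complex.DeMoivre by (simp add: field_simps)

lemma rou_double_pow_n: "n > 0 \<Longrightarrow> rou (2 * n) ^ n = -1"
  unfolding rou_def Complex.DeMoivre by (simp add: field_simps)

lemma rou_double_close: "n > 0 \<Longrightarrow> cmod (rou (2 * n) - 1) \<le> pi / real n"
  unfolding rou_def using cis_minus_1_le[of "2 * pi / real (2 * n)"] by simp

lemma sum_even_odd: "(\<Sum>k<2*(n::nat). f k) = (\<Sum>j<n. f (2*j)) + (\<Sum>j<n. f (2*j+1))"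
  by (induct n) (simp_all add: algebra_simps)

context unital_cstar_algebra
begin

lemma sa_real_spec:
  assumes sa: "star h = h" and z: "Im z \<noteq> 0"
  shows "invertible_el (h - cscale z 1)"
proof (rule ccontr)
  assume ni: "\<not> invertible_el (h - cscale z 1)"
  have key: "(Re z)^2 + (Im z + t)^2 \<le> (norm h)^2 + t^2" for t :: real
  proof -
    let ?y = "h + cscale (\<i> * of_real t) 1"
    have eq: "?y - cscale (z + \<i> * of_real t) 1 = h - cscale z 1"
      by (simp add: cscale_add_left)
    have "cmod (z + \<i> * of_real t) \<le> norm ?y"
      using spec_bound[of ?y "z + \<i> * of_real t"] ni eq by force
    then have a: "(cmod (z + \<i> * of_real t))^2 \<le> (norm ?y)^2"
      by (simp add: power_mono)
    have sy: "star ?y = h + cscale (- \<i> * of_real t) 1"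
      by (simp add: star_add star_cscale sa)
    have "star ?y * ?y = h * h + (h * cscale (\<i> * of_real t) 1 + cscale (- \<i> * of_real t) 1 * h)
        + cscale (- \<i> * of_real t) 1 * cscale (\<i> * of_real t) 1"
      unfolding sy by (simp add: algebra_simps)
    also have "h * cscale (\<i> * of_real t) 1 + cscale (- \<i> * of_real t) 1 * h = 0"
      by (simp add: cscale_1_mult mult_cscale_1 cscale_add_left[symmetric])
    also have "cscale (- \<i> * of_real t) 1 * cscale (\<i> * of_real t) 1 = cscale (of_real (t^2)) 1"
    proof -
      have "- \<i> * of_real t * (\<i> * of_real t) = complex_of_real (t^2)"
        using i_mult_i[of "of_real t" "of_real t"] by (simp add: power2_eq_square)
      then show ?thesis by (simp add: cscale_mult)
    qed
    finally have "star ?y * ?y = h * h + cscale (of_real (t^2)) 1" by simp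
    then have "(norm ?y)^2 = norm (h * h + cscale (of_real (t^2)) 1)" by (metis cstar_identity)
    also have "\<dots> \<le> norm (h * h) + norm (cscale (of_real (t^2)) 1)" by (rule norm_triangle_ineq)
    also have "\<dots> = (norm h)^2 + t^2" by (simp add: norm_sq_sa[OF sa] norm_cscale norm_power)
    finally have b: "(norm ?y)^2 \<le> (norm h)^2 + t^2" .
    have "(cmod (z + \<i> * of_real t))^2 = (Re z)^2 + (Im z + t)^2" by (simp add: cmod_power2)
    then show ?thesis using a b by linarith
  qed
  define t where "t = ((norm h)^2 + 1) / (2 * Im z)"
  have "(Re z)^2 + (Im z + t)^2 \<le> (norm h)^2 + t^2" by (rule key)
  then have "2 * Im z * t \<le> (norm h)^2" by (simp add: power2_eq_square algebra_simps)
       (smt (verit) zero_le_power2 power2_eq_square)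
  moreover have "2 * Im z * t = (norm h)^2 + 1" using z by (simp add: t_def)
  ultimately show False by simp
qed

end

lemma idem_near_one:
  fixes e :: "'a::{real_normed_algebra_1, banach}"
  assumes "e * e = e" "norm (e - 1) < 1" shows "e = 1"
proof -
  have "norm (1 - e) < 1" using assms(2) by (simp add: norm_minus_commute)
  then have i: "invertible_el (1 - (1 - e))" by (rule neumann(1))
  then have i: "invertible_el e" by simp
  have "e = ainv e * e * e" using ainv(2)[OF i] by simp
  also have "\<dots> = ainv e * e" using assms(1) by (simp add: mult.assoc)
  finally show ?thesis using ainv(2)[OF i] by simp
qed

lemma geo_left: fixes x :: "'a::ring_1" shows "(1 - x) * (\<Sum>m<n. x ^ m) = 1 - x ^ n"
proof (induct n)
  case (Suc n)
  have "(1 - x) * (\<Sum>m<Suc n. x^m) = (1 - x) * (\<Sum>m<n. x^m) + (1 - x) * x^n"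
    by (simp add: distrib_left)
  also have "\<dots> = 1 - x ^ Suc n" using Suc by (simp add: algebra_simps)
  finally show ?case .
qed simp

lemma geo_right: fixes x :: "'a::ring_1" shows "(\<Sum>m<n. x ^ m) * (1 - x) = 1 - x ^ n"
proof (induct n)
  case (Suc n)
  have "(\<Sum>m<Suc n. x^m) * (1 - x) = (\<Sum>m<n. x^m) * (1 - x) + x^n * (1 - x)"
    by (simp add: distrib_right)
  also have "\<dots> = 1 - x ^ Suc n" using Suc by (simp add: algebra_simps power_commutes)
  finally show ?case .
qed simp

locale rick = unital_cstar_algebra +
  fixes a :: "'a::{real_normed_algebra_1, banach}"
  assumes Hinv: "\<And>l. cmod l \<le> 1 \<Longrightarrow> invertible_el (1 - cscale l a)"
begin

definition g :: "complex \<Rightarrow> 'a" where "g l = ainv (1 - cscale l a)"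

lemma g_inv: "cmod l \<le> 1 \<Longrightarrow> (1 - cscale l a) * g l = 1 \<and> g l * (1 - cscale l a) = 1"
  unfolding g_def using ainv Hinv by blast

lemma resolvent:
  assumes "cmod l \<le> 1" "cmod m \<le> 1"
  shows "g l - g m = g l * cscale (l - m) a * g m"
proof -
  have "g l * cscale (l - m) a * g m = g l * ((1 - cscale m a) - (1 - cscale l a)) * g m"
    by (simp add: cscale_diff_left)
  also have "\<dots> = g l * ((1 - cscale m a) * g m) - (g l * (1 - cscale l a)) * g m"
    by (simp add: algebra_simps mult.assoc)
  also have "\<dots> = g l - g m" using g_inv assms by simp
  finally show ?thesis by simp
qed

lemma resolvent_norm:
  assumes "cmod l \<le> 1" "cmod m \<le> 1"
  shows "norm (g l - g m) \<le> norm (g l) * (cmod (l - m) * norm a) * norm (g m)"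
proof -
  have "norm (g l - g m) = norm (g l * cscale (l - m) a * g m)" using resolvent[OF assms] by simp
  also have "\<dots> \<le> norm (g l * cscale (l - m) a) * norm (g m)" by (rule norm_mult_ineq)
  also have "\<dots> \<le> norm (g l) * norm (cscale (l - m) a) * norm (g m)"
    by (intro mult_right_mono norm_mult_ineq) simp
  finally show ?thesis by (simp add: norm_cscale)
qed

lemma g_cont: "continuous_on (cball 0 1) g"
  unfolding continuous_on_iff
proof (intro ballI allI impI)
  fix m e assume m: "m \<in> cball (0::complex) 1" and e: "(0::real) < e"
  let ?w = "norm (g m)" and ?na = "norm a"
  define K where "K = 2 * (?w + 1)^2 * (?na + 1)"
  have K: "K > 0"
  proof -
    have "0 < ?w + 1" "0 < ?na + 1" by (auto intro: add_nonneg_pos)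
    then show ?thesis unfolding K_def by (intro mult_pos_pos) auto
  qed
  have wa: "?na * ?w \<le> K / 2"
  proof -
    have "?na * ?w \<le> (?na + 1) * (?w + 1)" by (intro mult_mono) auto
    also have "\<dots> \<le> (?na + 1) * (?w + 1)^2"
    proof (intro mult_left_mono)
      have "1 * (?w + 1) \<le> (?w + 1) * (?w + 1)" by (intro mult_right_mono) auto
      then show "?w + 1 \<le> (?w + 1)^2" by (simp add: power2_eq_square)
    qed auto
    finally show ?thesis by (simp add: K_def mult.commute)
  qed
  have w2: "2 * ?w * ?w * ?na \<le> K"
  proof -
    have "?w * ?w \<le> (?w + 1)^2" by (simp add: power2_eq_square mult_mono)
    then have "?w * ?w * ?na \<le> (?w + 1)^2 * (?na + 1)" by (intro mult_mono) auto
    then show ?thesis by (simp add: K_def)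
  qed
  show "\<exists>d>0. \<forall>l\<in>cball 0 1. dist l m < d \<longrightarrow> dist (g l) (g m) < e"
  proof (intro exI[of _ "min (1/K) (e/K)"] conjI ballI impI)
    show "0 < min (1/K) (e/K)" using K e by simp
    fix l assume l: "l \<in> cball (0::complex) 1" and d: "dist l m < min (1/K) (e/K)"
    have lm: "cmod (l - m) < 1/K" "cmod (l - m) < e/K" using d by (auto simp: dist_norm)
    have l1: "cmod l \<le> 1" and m1: "cmod m \<le> 1" using l m by auto
    define c where "c = cmod (l - m) * ?na * ?w"
    define dl where "dl = norm (g l - g m)"
    have c: "c \<le> 1/2"
    proof -
      have "c = cmod (l - m) * (?na * ?w)" by (simp add: c_def mult.assoc)
      also have "\<dots> \<le> (1/K) * (K/2)" using lm(1) wa K by (intro mult_mono) auto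
      finally show ?thesis using K by simp
    qed
    have c0: "0 \<le> c" by (simp add: c_def)
    have gl: "norm (g l) \<le> ?w + dl" unfolding dl_def using norm_triangle_ineq[of "g l - g m" "g m"] by simp
    have "dl \<le> norm (g l) * (cmod (l - m) * ?na) * ?w" unfolding dl_def by (rule resolvent_norm[OF l1 m1])
    also have "\<dots> = norm (g l) * c" by (simp add: c_def mult.assoc mult.commute mult.left_commute)
    also have "\<dots> \<le> (?w + dl) * c" by (rule mult_right_mono[OF gl c0])
    finally have "dl \<le> (?w + dl) * c" .
    then have "dl * (1 - c) \<le> ?w * c" by (simp add: algebra_simps)
    moreover have "dl * (1/2) \<le> dl * (1 - c)" using c by (intro mult_left_mono) (auto simp: dl_def)
    ultimately have "dl \<le> 2 * ?w * c" by linarith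
    also have "\<dots> = (2 * ?w * ?w * ?na) * cmod (l - m)" by (simp add: c_def mult_ac)
    also have "\<dots> \<le> K * cmod (l - m)" by (rule mult_right_mono[OF w2]) simp
    also have "\<dots> < K * (e / K)" using lm(2) K by (intro mult_strict_left_mono) auto
    also have "\<dots> = e" using K by simp
    finally show "dist (g l) (g m) < e" by (simp add: dist_norm dl_def)
  qed
qed

definition C :: real where "C = (SOME C. C > 0 \<and> (\<forall>l\<in>cball 0 1. norm (g l) \<le> C))"

lemma C_prop: "C > 0" "cmod l \<le> 1 \<Longrightarrow> norm (g l) \<le> C"
proof -
  have "compact (g ` cball 0 1)" by (rule compact_continuous_image[OF g_cont compact_cball])
  then have "bounded (g ` cball 0 1)" by (rule compact_imp_bounded)
  then have "\<exists>C. C > 0 \<and> (\<forall>l\<in>cball 0 1. norm (g l) \<le> C)" by (auto simp: bounded_pos)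
  from someI_ex[OF this] show "C > 0" "cmod l \<le> 1 \<Longrightarrow> norm (g l) \<le> C"
    unfolding C_def by auto
qed

definition Lc :: real where "Lc = C * C * norm a"

lemma Lc_nonneg: "Lc \<ge> 0" unfolding Lc_def using C_prop(1) by simp

lemma g_lip:
  assumes "cmod l \<le> 1" "cmod m \<le> 1"
  shows "norm (g l - g m) \<le> Lc * cmod (l - m)"
proof -
  have "norm (g l - g m) \<le> norm (g l) * (cmod (l - m) * norm a) * norm (g m)"
    by (rule resolvent_norm[OF assms])
  also have "\<dots> \<le> C * (cmod (l - m) * norm a) * C"
    using C_prop assms by (intro mult_mono) auto
  finally show ?thesis by (simp add: Lc_def mult_ac)
qed

end

lemma half_lemma: "scaleR (1/2) (x + y) - x = scaleR (1/2) (y - (x::'a::real_vector))"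
proof -
  have "x = scaleR (1/2) (x + x)" by (simp flip: scaleR_2)
  then have "scaleR (1/2) (x + y) - x = scaleR (1/2) (x + y) - scaleR (1/2) (x + x)" by simp
  also have "\<dots> = scaleR (1/2) ((x + y) - (x + x))" by (simp only: scaleR_diff_right)
  finally show ?thesis by simp
qed

lemma scaleR_inv_of_nat: "n > 0 \<Longrightarrow> scaleR (1 / real n) (of_nat n :: 'a::real_normed_algebra_1) = 1"
proof -
  assume n: "n > 0"
  have "(of_nat n :: 'a) = scaleR (real n) 1" by (simp add: scaleR_conv_of_real)
  then show ?thesis using n by simp
qed

context rick
begin

definition Fn :: "nat \<Rightarrow> complex \<Rightarrow> 'a" where
  "Fn n l = scaleR (1 / real n) (\<Sum>k<n. g (rou n ^ k * l))"

lemma cmod_rou_mult[simp]: "cmod (rou n ^ k * l) = cmod l"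
  by (simp add: norm_mult)

lemma cscale_of_nat_1: "cscale (of_nat n) 1 = (of_nat n :: 'a)"
proof -
  have "cscale (of_nat n) (1::'a) = cscale (complex_of_real (real n)) 1" by simp
  also have "\<dots> = scaleR (real n) 1" by (rule cscale_of_real)
  also have "\<dots> = of_nat n" by (simp add: of_real_def[symmetric])
  finally show ?thesis .
qed

lemma Fn_key:
  assumes n: "n > 0" and l: "cmod l \<le> 1"
  shows "(\<Sum>k<n. g (rou n ^ k * l)) * (1 - cscale (l^n) (a^n)) = of_nat n"
    "(1 - cscale (l^n) (a^n)) * (\<Sum>k<n. g (rou n ^ k * l)) = of_nat n"
proof -
  let ?X = "cscale (l^n) (a^n)"
  define S where "S k = (\<Sum>m<n. cscale ((rou n ^ k * l)^m) (a^m))" for k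
  have each: "g (rou n ^ k * l) * (1 - ?X) = S k \<and> (1 - ?X) * g (rou n ^ k * l) = S k" for k
  proof -
    define mu where "mu = rou n ^ k * l"
    let ?x = "cscale mu a"
    have Sx: "S k = (\<Sum>m<n. ?x ^ m)" by (simp add: S_def mu_def cscale_power)
    have "mu ^ n = (rou n ^ n) ^ k * l ^ n" by (simp add: mu_def power_mult_distrib power_mult[symmetric] mult.commute)
    then have mun: "mu ^ n = l ^ n" using rou_pow_n[OF n] by simp
    have xn: "?x ^ n = ?X" by (simp add: cscale_power mun)
    have mu1: "cmod mu \<le> 1" using l by (simp add: mu_def)
    have "g mu * (1 - ?X) = g mu * ((1 - ?x) * (\<Sum>m<n. ?x ^ m))" by (simp add: geo_left xn)
    also have "\<dots> = (g mu * (1 - ?x)) * (\<Sum>m<n. ?x ^ m)" by (simp add: mult.assoc)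
    also have "\<dots> = S k" using g_inv[OF mu1] Sx by simp
    finally have 1: "g mu * (1 - ?X) = S k" .
    have "(1 - ?X) * g mu = ((\<Sum>m<n. ?x ^ m) * (1 - ?x)) * g mu" by (simp add: geo_right xn)
    also have "\<dots> = (\<Sum>m<n. ?x ^ m) * ((1 - ?x) * g mu)" by (simp add: mult.assoc)
    also have "\<dots> = S k" using g_inv[OF mu1] Sx by simp
    finally show ?thesis using 1 by (simp add: mu_def)
  qed
  have "(\<Sum>k<n. S k) = (\<Sum>m<n. \<Sum>k<n. cscale ((rou n ^ k * l)^m) (a^m))"
    unfolding S_def by (rule sum.swap)
  also have "\<dots> = (\<Sum>m<n. cscale (\<Sum>k<n. (rou n ^ k * l)^m) (a^m))"
    by (simp add: cscale_sum_left)
  also have "\<dots> = (\<Sum>m<n. cscale (l^m * (\<Sum>k<n. (rou n ^ k)^m)) (a^m))"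
    by (simp add: power_mult_distrib sum_distrib_left mult.commute)
  also have "\<dots> = (\<Sum>m<n. if m = 0 then cscale (of_nat n) 1 else 0)"
    by (intro sum.cong refl) (simp add: rou_sum[OF n])
  also have "\<dots> = cscale (of_nat n) 1" using n by (simp add: sum.delta)
  finally have sumS: "(\<Sum>k<n. S k) = of_nat n" by (simp add: cscale_of_nat_1)
  show "(\<Sum>k<n. g (rou n ^ k * l)) * (1 - ?X) = of_nat n"
    by (simp add: sum_distrib_right each sumS)
  show "(1 - ?X) * (\<Sum>k<n. g (rou n ^ k * l)) = of_nat n"
    by (simp add: sum_distrib_left each sumS)
qed

lemma Fn_inv:
  assumes n: "n > 0" and l: "cmod l \<le> 1"
  shows "Fn n l * (1 - cscale (l^n) (a^n)) = 1" "(1 - cscale (l^n) (a^n)) * Fn n l = 1"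
proof -
  have e: "scaleR (1 / real n) (of_nat n :: 'a) = 1" using n by (rule scaleR_inv_of_nat)
  show "Fn n l * (1 - cscale (l^n) (a^n)) = 1"
    unfolding Fn_def by (simp add: Fn_key[OF n l] e)
  show "(1 - cscale (l^n) (a^n)) * Fn n l = 1"
    unfolding Fn_def by (simp add: Fn_key[OF n l] e)
qed

lemma Fn_inv2:
  assumes n: "n > 0" and l: "cmod l \<le> 1"
  shows "invertible_el (1 - cscale (l^n) (a^n))" "Fn n l = ainv (1 - cscale (l^n) (a^n))"
  using Fn_inv[OF n l] by (auto intro: invertible_elI ainv_eq[symmetric])

lemma Fn_lip:
  assumes n: "n > 0" and l: "cmod l \<le> 1" and m: "cmod m \<le> 1"
  shows "norm (Fn n l - Fn n m) \<le> Lc * cmod (l - m)"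
proof -
  have "Fn n l - Fn n m = scaleR (1 / real n) (\<Sum>k<n. g (rou n ^ k * l) - g (rou n ^ k * m))"
    by (simp add: Fn_def scaleR_diff_right sum_subtractf)
  then have "norm (Fn n l - Fn n m) = (1 / real n) * norm (\<Sum>k<n. g (rou n ^ k * l) - g (rou n ^ k * m))"
    by simp
  also have "\<dots> \<le> (1 / real n) * (\<Sum>k<n. Lc * cmod (l - m))"
  proof (intro mult_left_mono order_trans[OF norm_sum] sum_mono)
    fix k
    have "norm (g (rou n ^ k * l) - g (rou n ^ k * m)) \<le> Lc * cmod (rou n ^ k * l - rou n ^ k * m)"
      by (rule g_lip) (use l m in auto)
    also have "cmod (rou n ^ k * l - rou n ^ k * m) = cmod (l - m)"
      by (simp add: right_diff_distrib[symmetric] norm_mult)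
    finally show "norm (g (rou n ^ k * l) - g (rou n ^ k * m)) \<le> Lc * cmod (l - m)" .
  qed simp
  also have "\<dots> = Lc * cmod (l - m)" using n by simp
  finally show ?thesis .
qed

lemma Fn_double_avg:
  assumes n: "n > 0"
  shows "Fn (2 * n) l = scaleR (1/2) (Fn n l + Fn n (rou (2 * n) * l))"
proof -
  let ?z = "rou (2 * n)"
  have z2: "\<And>j. ?z ^ (2*j) = rou n ^ j" by (simp only: power_mult rou_double_sq[OF n])
  have e1: "(\<Sum>j<n. g (?z ^ (2*j) * l)) = (\<Sum>j<n. g (rou n ^ j * l))" by (simp only: z2)
  have e2: "(\<Sum>j<n. g (?z ^ (2*j+1) * l)) = (\<Sum>j<n. g (rou n ^ j * (?z * l)))"
  proof (intro sum.cong refl)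
    fix j have "?z ^ (2*j+1) * l = ?z ^ (2*j) * (?z * l)" by (simp add: mult.assoc)
    then show "g (?z ^ (2*j+1) * l) = g (rou n ^ j * (?z * l))" by (simp only: z2)
  qed
  have s: "(\<Sum>k<2*n. g (?z ^ k * l)) = (\<Sum>j<n. g (rou n ^ j * l)) + (\<Sum>j<n. g (rou n ^ j * (?z * l)))"
    using sum_even_odd[of "\<lambda>k. g (?z ^ k * l)" n] e1 e2 by simp
  show ?thesis unfolding Fn_def s by (simp add: scaleR_add_right)
qed

lemma Fn_double_mult:
  assumes n: "n > 0" and l: "cmod l \<le> 1"
  shows "Fn (2 * n) l = Fn n l * Fn n (rou (2 * n) * l)"
proof -
  let ?z = "rou (2 * n)"
  let ?X = "cscale (l^n) (a^n)"
  have zl: "cmod (?z * l) \<le> 1" using l by (simp add: norm_mult)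
  have Y: "cscale ((?z * l)^n) (a^n) = - ?X"
    by (simp add: power_mult_distrib rou_double_pow_n[OF n] cscale_minus_left)
  have XX: "?X * ?X = cscale (l^(2*n)) (a^(2*n))"
  proof -
    have "?X * ?X = cscale (l^n * l^n) (a^n * a^n)" by (simp add: cscale_mult)
    also have "\<dots> = cscale (l^(2*n)) (a^(2*n))" by (simp only: power_add[symmetric] mult_2)
    finally show ?thesis .
  qed
  have prod: "1 - cscale (l^(2*n)) (a^(2*n)) = (1 + ?X) * (1 - ?X)"
    by (simp only: XX[symmetric]) (simp add: algebra_simps)
  have i1: "invertible_el (1 - ?X)" by (rule Fn_inv2(1)[OF n l])
  have i2: "invertible_el (1 + ?X)" using Fn_inv2(1)[OF n zl] Y by simp
  have "Fn (2 * n) l = ainv ((1 + ?X) * (1 - ?X))" using Fn_inv2(2)[of "2*n" l] n l prod by simp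
  also have "\<dots> = ainv (1 - ?X) * ainv (1 + ?X)" by (rule ainv_mult[OF i2 i1])
  also have "\<dots> = Fn n l * Fn n (?z * l)" using Fn_inv2(2)[OF n l] Fn_inv2(2)[OF n zl] Y by simp
  finally show ?thesis .
qed

lemma Fn_double_close:
  assumes n: "n > 0" and l: "cmod l \<le> 1"
  shows "norm (Fn n (rou (2 * n) * l) - Fn n l) \<le> Lc * pi / real n"
proof -
  have zl: "cmod (rou (2 * n) * l) \<le> 1" using l by (simp add: norm_mult)
  have "norm (Fn n (rou (2 * n) * l) - Fn n l) \<le> Lc * cmod (rou (2 * n) * l - l)"
    by (rule Fn_lip[OF n zl l])
  also have "rou (2 * n) * l - l = (rou (2 * n) - 1) * l" by (simp add: algebra_simps)
  also have "cmod ((rou (2 * n) - 1) * l) = cmod (rou (2 * n) - 1) * cmod l"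
    by (simp add: norm_mult)
  also have "\<dots> \<le> (pi / real n) * 1"
    using rou_double_close[OF n] l by (intro mult_mono) auto
  finally show ?thesis using Lc_nonneg by (simp add: mult_left_mono)
qed

lemma Fn_double_close2:
  assumes n: "n > 0" and l: "cmod l \<le> 1"
  shows "norm (Fn (2 * n) l - Fn n l) \<le> Lc * pi / real n"
proof -
  have "Fn (2 * n) l - Fn n l = scaleR (1/2) (Fn n (rou (2 * n) * l) - Fn n l)"
    unfolding Fn_double_avg[OF n] by (rule half_lemma)
  then have "norm (Fn (2 * n) l - Fn n l) = (1/2) * norm (Fn n (rou (2 * n) * l) - Fn n l)" by simp
  also have "\<dots> \<le> norm (Fn n (rou (2 * n) * l) - Fn n l)" by simp
  also have "\<dots> \<le> Lc * pi / real n" by (rule Fn_double_close[OF n l])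
  finally show ?thesis .
qed

end

lemma min_step: "0 \<le> h \<Longrightarrow> \<bar>min 1 (x + h) - min 1 (x::real)\<bar> \<le> h"
  by (simp add: min_def)

context rick
begin

definition G :: "nat \<Rightarrow> complex \<Rightarrow> 'a" where "G m l = Fn (2^m) l"

lemma G_diff:
  assumes l: "cmod l \<le> 1"
  shows "norm (G (Suc m) l - G m l) \<le> Lc * pi * (1/2)^m"
proof -
  have "norm (G (Suc m) l - G m l) \<le> Lc * pi / real (2^m)"
    unfolding G_def using Fn_double_close2[of "2^m" l] l by simp
  also have "\<dots> = Lc * pi * (1/2)^m" by (simp add: power_one_over)
  finally show ?thesis .
qed

lemma G_conv:
  assumes l: "cmod l \<le> 1"
  shows "convergent (\<lambda>m. G m l)"
proof -
  let ?d = "\<lambda>m. G (Suc m) l - G m l"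
  have sg: "summable (\<lambda>m. Lc * pi * (1/2::real)^m)"
    by (intro summable_mult summable_geometric) simp
  have sd: "summable ?d"
    by (rule summable_comparison_test[OF _ sg]) (use G_diff[OF l] in auto)
  have "(\<lambda>m. \<Sum>i<m. ?d i) \<longlonglongrightarrow> suminf ?d" by (rule summable_LIMSEQ[OF sd])
  then have "(\<lambda>m. G 0 l + (\<Sum>i<m. ?d i)) \<longlonglongrightarrow> G 0 l + suminf ?d" by (intro tendsto_add tendsto_const)
  moreover have "G 0 l + (\<Sum>i<m. ?d i) = G m l" for m
    using sum_lessThan_telescope[of "\<lambda>i. G i l" m] by simp
  ultimately show ?thesis unfolding convergent_def by auto
qed

definition E :: "complex \<Rightarrow> 'a" where "E l = lim (\<lambda>m. G m l)"

lemma G_E: "cmod l \<le> 1 \<Longrightarrow> (\<lambda>m. G m l) \<longlonglongrightarrow> E l"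
  unfolding E_def using G_conv convergent_LIMSEQ_iff by blast

lemma E_idem:
  assumes l: "cmod l \<le> 1"
  shows "E l * E l = E l"
proof -
  define H where "H m = Fn (2^m) (rou (2 * 2^m) * l)" for m
  have GS: "G (Suc m) l = G m l * H m" for m
    unfolding G_def H_def using Fn_double_mult[of "2^m" l] l by simp
  have hb: "norm (H m - G m l) \<le> Lc * pi * (1/2)^m" for m
  proof -
    have "norm (H m - G m l) \<le> Lc * pi / real (2^m)"
      unfolding G_def H_def using Fn_double_close[of "2^m" l] l by simp
    also have "\<dots> = Lc * pi * (1/2)^m" by (simp add: power_one_over)
    finally show ?thesis .
  qed
  have z: "(\<lambda>m. Lc * pi * (1/2::real)^m) \<longlonglongrightarrow> 0"
    by (intro tendsto_mult_right_zero LIMSEQ_power_zero) simp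
  have "(\<lambda>m. H m - G m l) \<longlonglongrightarrow> 0"
    by (rule Lim_null_comparison[OF _ z]) (use hb in auto)
  then have "(\<lambda>m. G m l + (H m - G m l)) \<longlonglongrightarrow> E l + 0"
    by (intro tendsto_add G_E[OF l])
  then have HE: "H \<longlonglongrightarrow> E l" by simp
  have "(\<lambda>m. G m l * H m) \<longlonglongrightarrow> E l * E l" by (intro tendsto_mult G_E[OF l] HE)
  then have "(\<lambda>m. G (Suc m) l) \<longlonglongrightarrow> E l * E l" by (simp add: GS)
  moreover have "(\<lambda>m. G (Suc m) l) \<longlonglongrightarrow> E l" using G_E[OF l] by (rule LIMSEQ_Suc)
  ultimately show ?thesis using LIMSEQ_unique by blast
qed

lemma E_lip:
  assumes l: "cmod l \<le> 1" and m: "cmod m \<le> 1"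
  shows "norm (E l - E m) \<le> Lc * cmod (l - m)"
proof -
  have "(\<lambda>n. norm (G n l - G n m)) \<longlonglongrightarrow> norm (E l - E m)"
    by (intro tendsto_norm tendsto_diff G_E l m)
  moreover have "\<forall>n. norm (G n l - G n m) \<le> Lc * cmod (l - m)"
    unfolding G_def using Fn_lip l m by simp
  ultimately show ?thesis by (intro LIMSEQ_le_const2) auto
qed

lemma E0: "E 0 = 1"
proof -
  have g0: "g 0 = 1" unfolding g_def by (simp add: ainv_eq)
  have "G m 0 = 1" for m
    unfolding G_def Fn_def using scaleR_inv_of_nat[of "2^m", where 'a='a] by (simp add: g0)
  then have "(\<lambda>m. G m 0) \<longlonglongrightarrow> 1" by simp
  moreover have "(\<lambda>m. G m 0) \<longlonglongrightarrow> E 0" by (rule G_E) simp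
  ultimately show ?thesis using LIMSEQ_unique by blast
qed

lemma E_step:
  assumes s: "0 \<le> s" "s \<le> 1" and t: "0 \<le> t" "t \<le> 1"
    and Es: "E (of_real s) = 1" and st: "\<bar>t - s\<bar> * Lc < 1"
  shows "E (of_real t) = 1"
proof (rule idem_near_one)
  show "E (of_real t) * E (of_real t) = E (of_real t)" by (rule E_idem) (use t in auto)
  have "norm (E (of_real t) - E (of_real s)) \<le> Lc * cmod (of_real t - of_real s)"
    by (rule E_lip) (use s t in auto)
  also have "\<dots> = \<bar>t - s\<bar> * Lc" by (simp add: mult.commute flip: of_real_diff)
  finally show "norm (E (of_real t) - 1) < 1" using Es st by simp
qed

lemma E1: "E 1 = 1"
proof -
  define h where "h = 1 / (Lc + 1)"
  have h: "h > 0" "h * Lc < 1" using Lc_nonneg by (auto simp: h_def field_simps)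
  have step: "E (of_real (min 1 (real k * h))) = 1" for k
  proof (induct k)
    case 0 then show ?case using E0 by simp
  next
    case (Suc k)
    show ?case
    proof (rule E_step[OF _ _ _ _ Suc])
      have "real (Suc k) * h = real k * h + h" by (simp add: algebra_simps)
      then have "\<bar>min 1 (real (Suc k) * h) - min 1 (real k * h)\<bar> \<le> h"
        using min_step[of h "real k * h"] h by simp
      then have "\<bar>min 1 (real (Suc k) * h) - min 1 (real k * h)\<bar> * Lc \<le> h * Lc"
        by (intro mult_right_mono Lc_nonneg)
      then show "\<bar>min 1 (real (Suc k) * h) - min 1 (real k * h)\<bar> * Lc < 1" using h(2) by (rule le_less_trans)
    next
      show "0 \<le> min 1 (real k * h)" using h(1) by simp
      show "min 1 (real k * h) \<le> 1" by simp
      show "0 \<le> min 1 (real (Suc k) * h)" using h(1) by (simp del: of_nat_Suc)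
      show "min 1 (real (Suc k) * h) \<le> 1" by simp
    qed
  qed
  define k where "k = nat \<lceil>Lc + 1\<rceil>"
  have "real k * h \<ge> 1"
  proof -
    have "Lc + 1 \<le> real k" unfolding k_def by linarith
    then have "(Lc + 1) * h \<le> real k * h" using h by (intro mult_right_mono) auto
    moreover have "(Lc + 1) * h = 1" using Lc_nonneg by (simp add: h_def)
    ultimately show ?thesis by simp
  qed
  then have "min 1 (real k * h) = 1" by simp
  then show ?thesis using step[of k] by simp
qed

lemma rick_pow: "\<exists>m. norm (a ^ (2^m)) < 1"
proof -
  have "(\<lambda>m. G m 1) \<longlonglongrightarrow> 1" using G_E[of 1] E1 by simp
  from LIMSEQ_D[OF this, of "1/2"] obtain m where m: "norm (G m 1 - 1) < 1/2" by auto
  let ?n = "2^m :: nat"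
  have n: "?n > 0" by simp
  have i: "invertible_el (1 - a ^ ?n)" and Geq: "G m 1 = ainv (1 - a ^ ?n)"
    using Fn_inv2[OF n, of 1] by (auto simp: G_def)
  define u where "u = 1 - G m 1"
  have nu: "norm u < 1/2" using m by (simp add: u_def norm_minus_commute)
  have "norm (ainv (1 - u) - 1) \<le> norm u / (1 - norm u)" by (rule neumann(3)) (use nu in auto)
  also have "\<dots> < 1" using nu by (simp add: field_simps)
  finally have "norm (ainv (1 - u) - 1) < 1" .
  moreover have "ainv (1 - u) = 1 - a ^ ?n" unfolding u_def using Geq ainv_ainv[OF i] by simp
  ultimately show ?thesis by auto
qed

end

context unital_cstar_algebra
begin

lemma sa_pow2_norm: "star a = a \<Longrightarrow> norm (a ^ (2^m)) = norm a ^ (2^m)"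
proof (induct m)
  case (Suc m)
  have sa: "star (a ^ (2^m)) = a ^ (2^m)" using Suc by (simp add: star_power)
  have "a ^ (2 ^ Suc m) = a ^ (2^m) * a ^ (2^m)" by (simp add: power_add[symmetric] mult_2)
  then have "norm (a ^ (2 ^ Suc m)) = (norm (a ^ (2^m)))^2" using norm_sq_sa[OF sa] by simp
  then show ?case using Suc by (simp add: power_mult[symmetric] mult.commute)
qed simp

lemma SR:
  assumes sa: "star a = a" and H: "\<And>l. cmod l \<le> 1 \<Longrightarrow> invertible_el (1 - cscale l a)"
  shows "norm a < 1"
proof -
  interpret rick star cscale a using H by unfold_locales auto
  obtain m where m: "norm (a ^ (2^m)) < 1" using rick_pow by blast
  then have "norm a ^ (2^m) < 1" using sa_pow2_norm[OF sa] by simp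
  then show ?thesis by (metis not_less one_le_power)
qed

lemma SR':
  assumes sa: "star g = g" and rho: "0 \<le> \<rho>"
    and spec: "\<And>z. \<not> invertible_el (g - cscale z 1) \<Longrightarrow> cmod z \<le> \<rho>"
  shows "norm g \<le> \<rho>"
proof (rule field_le_epsilon)
  fix e :: real assume e: "0 < e"
  define r where "r = \<rho> + e"
  have r: "r > 0" using rho e by (simp add: r_def)
  let ?a = "scaleR (1 / r) g"
  have "norm ?a < 1"
  proof (rule SR)
    show "star ?a = ?a" by (simp add: star_scaleR sa)
    fix l :: complex assume l: "cmod l \<le> 1"
    show "invertible_el (1 - cscale l ?a)"
    proof (cases "l = 0")
      case False
      have a1: "cscale l ?a = cscale (l / complex_of_real r) g"
        by (simp add: cscale_scaleR cscale_assoc[symmetric] divide_inverse of_real_inverse)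
      have r': "complex_of_real r \<noteq> 0" using r by simp
      have a3: "(- l / complex_of_real r) * (complex_of_real r / l) = -1" using False r' by (simp add: field_simps)
      have "cscale (- l / complex_of_real r) (g - cscale (complex_of_real r / l) 1)
          = cscale (- l / complex_of_real r) g - cscale ((- l / complex_of_real r) * (complex_of_real r / l)) 1"
        by (simp add: cscale_diff_right cscale_assoc[symmetric])
      also have "\<dots> = 1 - cscale l ?a" unfolding a3 a1
        by (simp add: cscale_minus_left minus_divide_left[symmetric])
      finally have eq: "1 - cscale l ?a = cscale (- l / complex_of_real r) (g - cscale (complex_of_real r / l) 1)" by simp
      have "cmod (complex_of_real r / l) \<ge> r"
        using False l r by (simp add: norm_divide field_simps mult_left_le)
      then have "invertible_el (g - cscale (complex_of_real r / l) 1)"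
      proof (rule contrapos_pp)
        assume "\<not> invertible_el (g - cscale (complex_of_real r / l) 1)"
        then have "cmod (complex_of_real r / l) \<le> \<rho>" by (rule spec)
        then show "\<not> r \<le> cmod (complex_of_real r / l)" using e by (simp add: r_def)
      qed
      then show ?thesis unfolding eq using False r by (intro invertible_cscale) auto
    qed simp
  qed
  then have "norm g / r < 1" using r by simp
  then show "norm g \<le> \<rho> + e" using r by (simp add: field_simps r_def)
qed

end

context unital_cstar_algebra
begin

abbreviation pos where "pos \<equiv> positive_el star cscale"

lemma pos_sa: "pos g \<Longrightarrow> star g = g" by (simp add: positive_el_def)

lemma pos_spec: "pos g \<Longrightarrow> \<not> invertible_el (g - cscale z 1) \<Longrightarrow> Im z = 0 \<and> 0 \<le> Re z"
  by (simp add: positive_el_def)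

lemma cscale_of_real_1: "cscale (complex_of_real t) 1 = scaleR t 1"
  by (rule cscale_of_real)

lemma real_cmod: "Im z = 0 \<Longrightarrow> cmod z = \<bar>Re z\<bar>"
  by (simp add: cmod_def)

lemma inv_diff_neg: "invertible_el (x - y) \<longleftrightarrow> invertible_el (y - x)"
  by (metis invertible_minus_iff minus_diff_eq)

lemma pos_norm:
  assumes p: "pos g" and t: "norm g \<le> t"
  shows "norm (scaleR t 1 - g) \<le> t"
proof (rule SR')
  show "star (scaleR t 1 - g) = scaleR t 1 - g" using pos_sa[OF p] by (simp add: star_diff star_scaleR)
  show "0 \<le> t" using t norm_ge_zero[of g] by linarith
  fix z assume ni: "\<not> invertible_el (scaleR t 1 - g - cscale z 1)"
  have eq: "scaleR t 1 - g - cscale z 1 = - (g - cscale (complex_of_real t - z) 1)"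
    by (simp add: cscale_diff_left cscale_of_real_1)
  have "\<not> invertible_el (g - cscale (complex_of_real t - z) 1)" using ni eq invertible_minus_iff by metis
  then have w: "Im (complex_of_real t - z) = 0 \<and> 0 \<le> Re (complex_of_real t - z)"
    and wb: "cmod (complex_of_real t - z) \<le> norm g"
    using pos_spec[OF p] spec_bound not_le by blast+
  have "Im z = 0" using w by simp
  moreover have "\<bar>Re (complex_of_real t - z)\<bar> \<le> norm g" using wb w real_cmod by fastforce
  ultimately show "cmod z \<le> t" using w t by (simp add: real_cmod)
qed

lemma norm_pos:
  assumes sa: "star g = g" and t: "0 \<le> t" and n: "norm (scaleR t 1 - g) \<le> t"
  shows "pos g"
  unfolding positive_el_def
proof (intro conjI sa allI impI)
  fix z assume ni: "\<not> invertible_el (g - cscale z 1)"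
  show iz: "Im z = 0" using sa_real_spec[OF sa] ni by blast
  show "0 \<le> Re z"
  proof (rule ccontr)
    assume r: "\<not> 0 \<le> Re z"
    have eq: "g - cscale z 1 = - ((scaleR t 1 - g) - cscale (complex_of_real t - z) 1)"
      by (simp add: cscale_diff_left cscale_of_real_1)
    have "cmod (complex_of_real t - z) = t - Re z" using iz r t by (simp add: real_cmod)
    then have "cmod (complex_of_real t - z) > norm (scaleR t 1 - g)" using n r by linarith
    then have "invertible_el ((scaleR t 1 - g) - cscale (complex_of_real t - z) 1)" by (rule spec_bound)
    then have "invertible_el (g - cscale z 1)" unfolding eq by (rule invertible_minus)
    then show False using ni by simp
  qed
qed

lemma pos_add:
  assumes "pos g1" "pos g2" shows "pos (g1 + g2)"
proof (rule norm_pos)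
  show "star (g1 + g2) = g1 + g2" using assms by (simp add: star_add pos_sa)
  show "0 \<le> norm g1 + norm g2" by simp
  have "scaleR (norm g1 + norm g2) 1 - (g1 + g2) = (scaleR (norm g1) 1 - g1) + (scaleR (norm g2) 1 - g2)"
    by (simp add: scaleR_add_left)
  then have "norm (scaleR (norm g1 + norm g2) 1 - (g1 + g2)) \<le> norm (scaleR (norm g1) 1 - g1) + norm (scaleR (norm g2) 1 - g2)"
    by (metis norm_triangle_ineq)
  also have "\<dots> \<le> norm g1 + norm g2" using pos_norm assms by (intro add_mono) auto
  finally show "norm (scaleR (norm g1 + norm g2) 1 - (g1 + g2)) \<le> norm g1 + norm g2" .
qed

lemma pos_scaleR:
  assumes p: "pos g" and c: "0 \<le> c" shows "pos (scaleR c g)"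
proof (rule norm_pos)
  show "star (scaleR c g) = scaleR c g" using p by (simp add: star_scaleR pos_sa)
  show "0 \<le> c * norm g" using c by simp
  have "scaleR (c * norm g) 1 - scaleR c g = scaleR c (scaleR (norm g) 1 - g)"
    by (simp add: scaleR_diff_right)
  then have "norm (scaleR (c * norm g) 1 - scaleR c g) = c * norm (scaleR (norm g) 1 - g)" using c by simp
  also have "\<dots> \<le> c * norm g" using pos_norm[OF p] c by (intro mult_left_mono) auto
  finally show "norm (scaleR (c * norm g) 1 - scaleR c g) \<le> c * norm g" .
qed

lemma pos_sq:
  assumes sa: "star h = h" shows "pos (h * h)"
  unfolding positive_el_def
proof (intro conjI allI impI)
  show "star (h * h) = h * h" by (simp add: star_mult sa)
  fix z assume ni: "\<not> invertible_el (h * h - cscale z 1)"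
  define v where "v = csqrt z"
  have vz: "v * v = z" unfolding v_def by (metis power2_csqrt power2_eq_square)
  have "(h - cscale v 1) * (h - cscale (- v) 1)
      = h * h - h * cscale (- v) 1 - cscale v 1 * h + cscale v 1 * cscale (- v) 1"
    by (simp add: algebra_simps)
  also have "\<dots> = h * h - cscale (- v) h - cscale v h + cscale (v * (- v)) 1"
    by (simp add: cscale_1_mult mult_cscale_1 cscale_mult cscale_assoc[symmetric])
  also have "\<dots> = h * h - cscale z 1"
    by (simp add: cscale_minus_left vz[symmetric])
  finally have eq: "h * h - cscale z 1 = (h - cscale v 1) * (h - cscale (- v) 1)" by simp
  have "Im v = 0"
  proof (rule ccontr)
    assume "Im v \<noteq> 0"
    then have "invertible_el (h - cscale v 1)" "invertible_el (h - cscale (- v) 1)"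
      using sa_real_spec[OF sa] by auto
    then have "invertible_el (h * h - cscale z 1)" unfolding eq by (rule invertible_mult)
    then show False using ni by simp
  qed
  then have "z = complex_of_real ((Re v)^2)" using vz by (simp add: complex_eq_iff power2_eq_square)
  then show "Im z = 0" "0 \<le> Re z" by simp_all
qed

lemma pos_zero: "pos 0"
  by (rule norm_pos) auto

lemma inv_shift_iff:
  assumes mu: "mu \<noteq> 0"
  shows "invertible_el (w - cscale mu 1) \<longleftrightarrow> invertible_el (1 - cscale (1/mu) w)"
proof -
  have eq: "w - cscale mu 1 = cscale (- mu) (1 - cscale (1/mu) w)"
    using mu by (simp add: cscale_diff_right cscale_assoc[symmetric] cscale_minus_left)
  have eq2: "1 - cscale (1/mu) w = cscale (- 1/mu) (w - cscale mu 1)"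
    using mu by (simp add: cscale_diff_right cscale_assoc[symmetric] cscale_minus_left)
  show ?thesis
  proof
    assume "invertible_el (w - cscale mu 1)"
    then show "invertible_el (1 - cscale (1/mu) w)" unfolding eq2 using mu by (intro invertible_cscale) auto
  next
    assume "invertible_el (1 - cscale (1/mu) w)"
    then show "invertible_el (w - cscale mu 1)" unfolding eq using mu by (intro invertible_cscale) auto
  qed
qed

lemma jacobson_spec:
  assumes mu: "mu \<noteq> 0" and i: "invertible_el (x * y - cscale mu 1)"
  shows "invertible_el (y * x - cscale mu 1)"
proof -
  have "invertible_el (1 - cscale (1/mu) (x * y))" using i inv_shift_iff[OF mu] by simp
  then have "invertible_el (1 - cscale (1/mu) x * y)" by (simp add: cscale_mult_left)
  then have "invertible_el (1 - y * cscale (1/mu) x)" by (rule jacobson)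
  then have "invertible_el (1 - cscale (1/mu) (y * x))" by (simp add: cscale_mult_right)
  then show ?thesis using inv_shift_iff[OF mu] by simp
qed

lemma negpos_zero:
  assumes p: "pos g" and zg: "star z * z = - g"
  shows "z = 0"
proof -
  define h where "h = scaleR (1/2) (z + star z)"
  define k where "k = cscale (- \<i>) (z - star z)"
  have sah: "star h = h" by (simp add: h_def star_scaleR star_add star_star add.commute)
  have sak: "star k = k"
    by (simp add: k_def star_cscale star_diff star_star cscale_diff_right cscale_minus_left)
  have hh: "h * h = scaleR (1/4) ((z + star z) * (z + star z))"
    by (simp add: h_def)
  have kk: "k * k = - ((z - star z) * (z - star z))"
    by (simp add: k_def cscale_mult cscale_minus_left)
  have "z * star z = scaleR 2 (h * h) + scaleR (1/2) (k * k) - star z * z"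
    unfolding hh kk by (simp add: algebra_simps scaleR_add_right scaleR_diff_right flip: scaleR_2)
  also have "\<dots> = scaleR 2 (h * h) + scaleR (1/2) (k * k) + g" using zg by simp
  finally have zz: "z * star z = scaleR 2 (h * h) + scaleR (1/2) (k * k) + g" .
  have pzz: "pos (z * star z)" unfolding zz
    by (intro pos_add pos_scaleR pos_sq sah sak p) auto
  have sa: "star (star z * z) = star z * z" by (simp add: star_mult star_star)
  have "norm (star z * z) \<le> 0"
  proof (rule SR'[OF sa])
    fix mu assume ni: "\<not> invertible_el (star z * z - cscale mu 1)"
    show "cmod mu \<le> 0"
    proof (rule ccontr)
      assume "\<not> cmod mu \<le> 0"
      then have mu: "mu \<noteq> 0" by auto
      show False
      proof (cases "Im mu = 0 \<and> 0 \<le> Re mu")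
        case True
        then have re: "0 < Re mu" using mu by (simp add: complex_eq_iff)
        have "star z * z - cscale mu 1 = - (g - cscale (- mu) 1)" using zg by (simp add: cscale_minus_left)
        moreover have "invertible_el (g - cscale (- mu) 1)" using pos_spec[OF p, of "- mu"] re by auto
        ultimately show False using ni invertible_minus by metis
      next
        case False
        then have "invertible_el (z * star z - cscale mu 1)" using pos_spec[OF pzz] by blast
        then have "invertible_el (star z * z - cscale mu 1)" by (rule jacobson_spec[OF mu])
        then show False using ni by simp
      qed
    qed
  qed simp
  then have "norm (star z * z) = 0" by simp
  then show ?thesis using norm_star_mult_self by blast
qed

end

definition bb :: "nat \<Rightarrow> real" where "bb n = pochhammer (-1/2) n / fact n"

lemma bb_alt: "bb n = ((1/2) gchoose n) * (-1)^n"
proof -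
  have "((1/2::real) gchoose n) * (-1)^n = ((-1)^n * (-1)^n) * pochhammer (-1/2) n / fact n"
    by (simp add: gbinomial_pochhammer)
  also have "(-1::real)^n * (-1)^n = 1" by (simp add: power_mult_distrib[symmetric])
  finally show ?thesis by (simp add: bb_def)
qed

lemma bb0[simp]: "bb 0 = 1" by (simp add: bb_def)

lemma bb_Suc_neg: "bb (Suc n) \<le> 0"
proof -
  have "pochhammer (-1/2::real) (Suc n) = (-1/2) * pochhammer (1/2) n" by (simp add: pochhammer_rec)
  moreover have "pochhammer (1/2::real) n > 0" by (rule pochhammer_pos) simp
  ultimately have "pochhammer (-1/2::real) (Suc n) < 0" by simp
  then show ?thesis unfolding bb_def by (simp add: divide_nonpos_pos)
qed

lemma bb_partial: "0 \<le> (\<Sum>k\<le>N. bb k)"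
proof -
  have "(\<Sum>k\<le>N. bb k) = (\<Sum>k\<le>N. ((1/2::real) gchoose k) * (-1)^k)" by (simp add: bb_alt)
  also have "\<dots> = (-1)^N * ((1/2 - 1) gchoose N)" by (rule gbinomial_sum_lower_neg)
  also have "((1/2 - 1::real) gchoose N) = (-1)^N * pochhammer (1/2) N / fact N"
    by (simp add: gbinomial_pochhammer)
  finally have "(\<Sum>k\<le>N. bb k) = ((-1)^N * (-1)^N) * pochhammer (1/2::real) N / fact N" by simp
  also have "(-1::real)^N * (-1)^N = 1" by (simp add: power_mult_distrib[symmetric])
  finally show ?thesis by (simp add: pochhammer_pos less_imp_le)
qed

lemma bb_tail_partial: "(\<Sum>n<N. \<bar>bb (Suc n)\<bar>) = 1 - (\<Sum>k\<le>N. bb k)"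
proof -
  have a: "\<bar>bb (Suc n)\<bar> = - bb (Suc n)" for n using bb_Suc_neg[of n] by simp
  have "(\<Sum>n<N. \<bar>bb (Suc n)\<bar>) = - (\<Sum>n<N. bb (Suc n))"
    by (simp add: a sum_negf)
  moreover have "(\<Sum>k\<le>N. bb k) = bb 0 + (\<Sum>n<N. bb (Suc n))"
    by (simp only: lessThan_Suc_atMost[symmetric] sum.lessThan_Suc_shift bb0)
  ultimately show ?thesis by simp
qed

lemma bb_tail_summable: "summable (\<lambda>n. \<bar>bb (Suc n)\<bar>)"
proof (rule bounded_imp_summable[where B=1])
  fix n
  have "(\<Sum>k\<le>n. \<bar>bb (Suc k)\<bar>) \<le> (\<Sum>k<Suc n. \<bar>bb (Suc k)\<bar>)" by (simp add: lessThan_Suc_atMost)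
  also have "\<dots> \<le> 1" using bb_tail_partial[of "Suc n"] bb_partial[of "Suc n"] by simp
  finally show "(\<Sum>k\<le>n. \<bar>bb (Suc k)\<bar>) \<le> 1" .
qed simp

lemma bb_tail_le1: "(\<Sum>n. \<bar>bb (Suc n)\<bar>) \<le> 1"
  by (rule suminf_le_const[OF bb_tail_summable]) (use bb_tail_partial bb_partial in auto)

lemma bb_summable: "summable (\<lambda>n. \<bar>bb n\<bar>)"
  using bb_tail_summable summable_Suc_iff by blast

lemma bb_cauchy: "(\<Sum>i\<le>k. bb i * bb (k - i)) = (if k = 0 then 1 else if k = 1 then -1 else 0)"
proof -
  have "(\<Sum>i\<le>k. bb i * bb (k - i)) = (\<Sum>i\<le>k. ((1/2::real) gchoose i) * ((1/2) gchoose (k - i)) * (-1)^k)"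
  proof (intro sum.cong refl)
    fix i assume "i \<in> {..k}"
    then have "(-1::real)^i * (-1)^(k-i) = (-1)^k" by (simp add: power_add[symmetric])
    moreover have "bb i * bb (k - i) = (((1/2::real) gchoose i) * ((1/2) gchoose (k - i))) * ((-1::real)^i * (-1)^(k-i))"
      by (simp only: bb_alt mult_ac)
    ultimately show "bb i * bb (k - i) = ((1/2::real) gchoose i) * ((1/2) gchoose (k - i)) * (-1)^k"
      by simp
  qed
  also have "\<dots> = (\<Sum>i\<le>k. ((1/2::real) gchoose i) * ((1/2) gchoose (k - i))) * (-1)^k"
    by (simp add: sum_distrib_right)
  also have "(\<Sum>i\<le>k. ((1/2::real) gchoose i) * ((1/2) gchoose (k - i))) = (1/2 + 1/2) gchoose k"
    using gbinomial_Vandermonde[of "1/2::real" "1/2" k] by (simp add: atLeast0AtMost)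
  also have "(1/2 + 1/2::real) gchoose k = of_nat (1 choose k)" 
  proof -
    have "(1/2 + 1/2::real) = of_nat 1" by simp
    then show ?thesis by (simp only: binomial_gbinomial)
  qed
  finally show ?thesis
    by (cases k) (auto simp: binomial_eq_0)
qed


context unital_cstar_algebra
begin

lemma binom_series:
  fixes u :: 'a
  assumes u: "norm u \<le> 1"
  shows "summable (\<lambda>n. norm (bb n *\<^sub>R u ^ n))"
    and "(\<Sum>n. bb n *\<^sub>R u ^ n) * (\<Sum>n. bb n *\<^sub>R u ^ n) = 1 - u"
    and "norm (1 - (\<Sum>n. bb n *\<^sub>R u ^ n)) \<le> 1"
proof -
  let ?f = "\<lambda>n. bb n *\<^sub>R u ^ n"
  have nb: "norm (?f n) \<le> \<bar>bb n\<bar>" for n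
  proof -
    have "norm (u ^ n) \<le> norm u ^ n" by (rule norm_power_ineq)
    also have "\<dots> \<le> 1" using u by (simp add: power_le_one)
    finally have "norm (u ^ n) \<le> 1" .
    then have "\<bar>bb n\<bar> * norm (u ^ n) \<le> \<bar>bb n\<bar> * 1" by (intro mult_left_mono) auto
    then show ?thesis by simp
  qed
  show sn: "summable (\<lambda>n. norm (?f n))"
    by (rule summable_comparison_test[OF _ bb_summable]) (use nb in auto)
  have "(\<Sum>n. ?f n) * (\<Sum>n. ?f n) = (\<Sum>k. \<Sum>i\<le>k. ?f i * ?f (k - i))"
    by (rule Cauchy_product[OF sn sn])
  also have "\<dots> = (\<Sum>k. (\<Sum>i\<le>k. bb i * bb (k - i)) *\<^sub>R u ^ k)"
  proof (intro suminf_cong)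
    fix k
    have "(\<Sum>i\<le>k. ?f i * ?f (k - i)) = (\<Sum>i\<le>k. (bb i * bb (k - i)) *\<^sub>R u ^ k)"
    proof (intro sum.cong refl)
      fix i assume "i \<in> {..k}"
      then have "u ^ i * u ^ (k - i) = u ^ k" by (simp add: power_add[symmetric])
      then show "?f i * ?f (k - i) = (bb i * bb (k - i)) *\<^sub>R u ^ k"
        by (simp only: mult_scaleR_left mult_scaleR_right scaleR_scaleR mult.commute)
    qed
    also have "\<dots> = (\<Sum>i\<le>k. bb i * bb (k - i)) *\<^sub>R u ^ k" by (simp add: scaleR_sum_left)
    finally show "(\<Sum>i\<le>k. ?f i * ?f (k - i)) = (\<Sum>i\<le>k. bb i * bb (k - i)) *\<^sub>R u ^ k" .
  qed
  also have "\<dots> = (\<Sum>k\<in>{0,1}. (\<Sum>i\<le>k. bb i * bb (k - i)) *\<^sub>R u ^ k)"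
    by (rule suminf_finite) (simp_all add: bb_cauchy)
  also have "\<dots> = 1 - u" by (simp add: bb_cauchy scaleR_minus_left)
  finally show "(\<Sum>n. ?f n) * (\<Sum>n. ?f n) = 1 - u" .
  have s: "summable ?f" using sn by (rule summable_norm_cancel)
  have sn1: "summable (\<lambda>n. norm (?f (Suc n)))" using sn by (subst summable_Suc_iff)
  have "1 - (\<Sum>n. ?f n) = - (\<Sum>n. ?f (Suc n))" using suminf_split_head[OF s] by simp
  then have "norm (1 - (\<Sum>n. ?f n)) = norm (\<Sum>n. ?f (Suc n))" by simp
  also have "\<dots> \<le> (\<Sum>n. norm (?f (Suc n)))"
    by (rule summable_norm[OF sn1])
  also have "\<dots> \<le> (\<Sum>n. \<bar>bb (Suc n)\<bar>)"
    by (rule suminf_le[OF _ sn1 bb_tail_summable]) (rule nb)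
  also have "\<dots> \<le> 1" by (rule bb_tail_le1)
  finally show "norm (1 - (\<Sum>n. ?f n)) \<le> 1" .
qed

lemma pos_sqrt:
  assumes p: "pos g"
  shows "\<exists>s. star s = s \<and> s * s = g \<and> pos s \<and> (\<forall>y. y * g = g * y \<longrightarrow> y * s = s * y)"
proof (cases "g = 0")
  case True
  then show ?thesis by (intro exI[of _ 0]) (auto simp: pos_zero)
next
  case False
  define t where "t = norm g"
  have t: "t > 0" using False by (simp add: t_def)
  define u where "u = scaleR (1/t) (scaleR t 1 - g)"
  have u_alt: "u = 1 - scaleR (1/t) g" using t by (simp add: u_def scaleR_diff_right)
  have nu: "norm u \<le> 1"
  proof -
    have "norm u = (1/t) * norm (scaleR t 1 - g)" using t by (simp add: u_def)
    also have "\<dots> \<le> (1/t) * t" using pos_norm[OF p, of t] t by (intro mult_left_mono) (auto simp: t_def)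
    finally show ?thesis using t by simp
  qed
  have sau: "star u = u" using pos_sa[OF p] by (simp add: u_alt star_diff star_scaleR)
  let ?f = "\<lambda>n. bb n *\<^sub>R u ^ n"
  define S where "S = (\<Sum>n. ?f n)"
  have sn: "summable (\<lambda>n. norm (?f n))" by (rule binom_series(1)[OF nu])
  have s: "summable ?f" using sn by (rule summable_norm_cancel)
  have SS: "S * S = scaleR (1/t) g" unfolding S_def using binom_series(2)[OF nu] by (simp add: u_alt)
  define r where "r = scaleR (sqrt t) S"
  have rr: "r * r = g"
  proof -
    have "r * r = scaleR (sqrt t * sqrt t) (S * S)" by (simp add: r_def)
    also have "\<dots> = g" using t by (simp add: SS)
    finally show ?thesis .
  qed
  have saS: "star S = S"
  proof -
    have "star S = (\<Sum>n. star (?f n))" unfolding S_def by (rule star_suminf[OF s])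
    also have "\<dots> = S" by (simp add: S_def star_scaleR star_power sau)
    finally show ?thesis .
  qed
  have sar: "star r = r" by (simp add: r_def star_scaleR saS)
  have comm: "y * r = r * y" if yg: "y * g = g * y" for y
  proof -
    have yu: "y * u = u * y" using yg by (simp add: u_alt algebra_simps)
    have yun: "y * u ^ n = u ^ n * y" for n
      by (induct n) (simp_all add: mult.assoc[symmetric] yu, simp add: mult.assoc)
    have "y * S = (\<Sum>n. y * ?f n)" unfolding S_def by (rule suminf_mult[OF s, symmetric])
    also have "\<dots> = (\<Sum>n. ?f n * y)" by (simp add: yun)
    also have "\<dots> = S * y" unfolding S_def by (rule suminf_mult2[OF s, symmetric])
    finally show ?thesis by (simp add: r_def)
  qed
  have posr: "pos r"
  proof (rule norm_pos[OF sar])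
    show "0 \<le> sqrt t" using t by simp
    have "scaleR (sqrt t) 1 - r = scaleR (sqrt t) (1 - S)" by (simp add: r_def scaleR_diff_right)
    then have "norm (scaleR (sqrt t) 1 - r) = sqrt t * norm (1 - S)" using t by simp
    also have "\<dots> \<le> sqrt t * 1" using binom_series(3)[OF nu] t by (intro mult_left_mono) (auto simp: S_def)
    finally show "norm (scaleR (sqrt t) 1 - r) \<le> sqrt t" by simp
  qed
  show ?thesis using sar rr posr comm by blast
qed

end

context unital_cstar_algebra
begin

lemma pos_star_mult: "pos (star z * z)"
proof -
  define h where "h = star z * z"
  have sah: "star h = h" by (simp add: h_def star_mult star_star)
  obtain r where sar: "star r = r" and rr: "r * r = h * h" and posr: "pos r"
    and rc: "\<And>y. y * (h * h) = (h * h) * y \<Longrightarrow> y * r = r * y"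
    using pos_sqrt[OF pos_sq[OF sah]] by blast
  have hr: "h * r = r * h" by (rule rc) (simp add: mult.assoc)
  define hp where "hp = scaleR (1/2) (r + h)"
  define hm where "hm = scaleR (1/2) (r - h)"
  have rh0: "(r + h) * (r - h) = 0"
  proof -
    have "(r + h) * (r - h) = (r * r - h * h) + (h * r - r * h)" by (simp add: algebra_simps)
    then show ?thesis using rr hr by simp
  qed
  have rh0': "(r - h) * (r + h) = 0"
  proof -
    have "(r - h) * (r + h) = (r * r - h * h) + (r * h - h * r)" by (simp add: algebra_simps)
    then show ?thesis using rr hr by simp
  qed
  have hphm: "hp * hm = 0" unfolding hp_def hm_def using rh0 by simp
  have hmhp: "hm * hp = 0" unfolding hp_def hm_def using rh0' by simp
  have sum: "hp + hm = r"
  proof -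
    have "hp + hm = scaleR (1/2) ((r + h) + (r - h))" unfolding hp_def hm_def by (simp only: scaleR_add_right)
    also have "(r + h) + (r - h) = scaleR 2 r" by (simp add: scaleR_2)
    finally show ?thesis by simp
  qed
  have dif: "hp - hm = h"
  proof -
    have "hp - hm = scaleR (1/2) ((r + h) - (r - h))" unfolding hp_def hm_def by (simp only: scaleR_diff_right)
    also have "(r + h) - (r - h) = scaleR 2 h" by (simp add: scaleR_2)
    finally show ?thesis by simp
  qed
  have sahm: "star hm = hm" by (simp add: hm_def star_scaleR star_diff sar sah)
  have poshm: "pos hm"
    unfolding positive_el_def
  proof (rule conjI[OF sahm], intro allI impI)
    fix mu assume ni: "\<not> invertible_el (hm - cscale mu 1)"
    show "Im mu = 0 \<and> 0 \<le> Re mu"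
    proof (rule ccontr)
      assume nmu: "\<not> (Im mu = 0 \<and> 0 \<le> Re mu)"
      then have mu: "mu \<noteq> 0" by auto
      have ir: "invertible_el (r - cscale mu 1)" using pos_spec[OF posr] nmu by blast
      let ?c = "cscale mu 1"
      have ex: "(x - ?c) * (y - ?c) = x * y - (cscale mu x + cscale mu y) + cscale (mu * mu) 1" for x y
      proof -
        have "(x - ?c) * (y - ?c) = x * y - (x * ?c + ?c * y) + ?c * ?c" by (simp add: algebra_simps)
        also have "x * ?c = cscale mu x" by (rule mult_cscale_1)
        also have "?c * y = cscale mu y" by (rule cscale_1_mult)
        also have "?c * ?c = cscale (mu * mu) 1" by (simp add: cscale_mult)
        finally show ?thesis .
      qed
      have e3: "cscale (- mu) (r - cscale mu 1) = - cscale mu r + cscale (mu * mu) 1"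
        by (simp add: cscale_diff_right cscale_minus_left cscale_assoc[symmetric])
      have prod: "(hp - ?c) * (hm - ?c) = cscale (- mu) (r - cscale mu 1)"
        unfolding ex e3 hphm by (simp add: cscale_add_right[symmetric] sum)
      have comm: "(hm - ?c) * (hp - ?c) = (hp - ?c) * (hm - ?c)"
        unfolding ex hphm hmhp by (simp add: add.commute)
      have "invertible_el ((hm - cscale mu 1) * (hp - cscale mu 1))"
        unfolding comm prod using mu ir by (intro invertible_cscale) auto
      then have "invertible_el (hm - cscale mu 1)" by (rule invertible_comm_factor(1)[OF comm])
      then show False using ni by simp
    qed
  qed
  obtain s where sas: "star s = s" and ss: "s * s = hm"
    using pos_sqrt[OF poshm] by blast
  have cube: "hm * hm * hm = (s * s * s) * (s * s * s)"
    by (simp add: ss[symmetric] mult.assoc)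
  have sa3: "star (s * s * s) = s * s * s" by (simp add: star_mult sas mult.assoc)
  have pos3: "pos (hm * hm * hm)" unfolding cube by (rule pos_sq[OF sa3])
  define w where "w = z * hm"
  have "star w * w = hm * h * hm" by (simp add: w_def star_mult sahm h_def mult.assoc)
  also have "\<dots> = hm * hp * hm - hm * hm * hm"
    by (simp only: dif[symmetric] left_diff_distrib right_diff_distrib)
  also have "\<dots> = - (hm * hm * hm)" by (simp add: hmhp)
  finally have ww: "star w * w = - (hm * hm * hm)" .
  then have "w = 0" by (rule negpos_zero[OF pos3])
  then have h3: "hm * hm * hm = 0" using ww by simp
  have sa2: "star (hm * hm) = hm * hm" by (simp add: star_mult sahm)
  have "(hm * hm) * (hm * hm) = hm * (hm * hm * hm)" by (simp add: mult.assoc)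
  then have "(hm * hm) * (hm * hm) = 0" using h3 by simp
  then have "norm (hm * hm) = 0" using norm_sq_sa[OF sa2] by simp
  then have "hm = 0" using norm_sq_sa[OF sahm] by simp
  then have "h = r" using sum dif by simp
  then show ?thesis using posr unfolding h_def by simp
qed

lemma proj_le:
  assumes P: "is_proj star P" and p: "is_proj star p" and le: "pos (P - p)"
  shows "P * p = p" "p * P = p"
proof -
  have PP: "P * P = P" "star P = P" and pp: "p * p = p" "star p = p" using P p by (auto simp: is_proj_def)
  obtain s where sas: "star s = s" and ss: "s * s = P - p" using pos_sqrt[OF le] by blast
  define d where "d = s * (1 - P)"
  define c where "c = p * (1 - P)"
  have sd: "star d = (1 - P) * s" by (simp add: d_def star_mult star_diff PP sas)
  have "star d * d = (1 - P) * (s * s) * (1 - P)" unfolding sd by (simp only: d_def mult.assoc)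
  also have "\<dots> = (1 - P) * (P - p) * (1 - P)" by (simp only: ss)
  also have "(1 - P) * (P - p) = - ((1 - P) * p)"
  proof -
    have "(1 - P) * P = 0" by (simp add: left_diff_distrib PP)
    then show ?thesis by (simp add: right_diff_distrib)
  qed
  finally have dd: "star d * d = - ((1 - P) * p * (1 - P))" by simp
  have sc: "star c = (1 - P) * p" by (simp add: c_def star_mult star_diff PP pp)
  have "star c * c = (1 - P) * (p * p) * (1 - P)" unfolding sc by (simp only: c_def mult.assoc)
  then have cc: "star c * c = (1 - P) * p * (1 - P)" by (simp only: pp)
  have "star c * c = - (star d * d)" using dd cc by simp
  then have "c = 0" by (rule negpos_zero[OF pos_star_mult])
  then show pP: "p * P = p" by (simp add: c_def algebra_simps)
  have "star (p * P) = star p" using pP by simp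
  then show "P * p = p" by (simp add: star_mult PP pp)
qed

end

context unital_cstar_algebra
begin

lemma star_ainv: "invertible_el x \<Longrightarrow> star (ainv x) = ainv (star x)"
proof -
  assume i: "invertible_el x"
  have "star x * star (ainv x) = 1" using ainv(2)[OF i] by (metis star_mult star_one)
  moreover have "star (ainv x) * star x = 1" using ainv(1)[OF i] by (metis star_mult star_one)
  ultimately show ?thesis by (intro ainv_eq[symmetric])
qed

lemma pos_one: "pos 1"
  using pos_sq[of 1] by simp

lemma pos_inv:
  assumes pn: "pos n" and i: "invertible_el n"
  shows "pos (ainv n)"
  unfolding positive_el_def
proof (rule conjI, rule_tac [2] allI, rule_tac [2] impI)
  show "star (ainv n) = ainv n" using star_ainv[OF i] pos_sa[OF pn] by simp
  fix mu assume ni: "\<not> invertible_el (ainv n - cscale mu 1)"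
  show "Im mu = 0 \<and> 0 \<le> Re mu"
  proof (rule ccontr)
    assume nmu: "\<not> (Im mu = 0 \<and> 0 \<le> Re mu)"
    then have mu: "mu \<noteq> 0" by auto
    have "\<not> (Im (1/mu) = 0 \<and> 0 \<le> Re (1/mu))"
    proof
      assume h: "Im (1/mu) = 0 \<and> 0 \<le> Re (1/mu)"
      have "Im mu = 0" using h mu by (auto simp: Im_divide)
      moreover have "0 \<le> Re mu"
      proof -
        have "Re (1/mu) = 1 / Re mu" using \<open>Im mu = 0\<close> by (simp add: Re_divide power2_eq_square)
        then show ?thesis using h by (simp add: zero_le_divide_1_iff)
      qed
      ultimately show False using nmu by simp
    qed
    then have i1: "invertible_el (n - cscale (1/mu) 1)" using pos_spec[OF pn] by blast
    have eq: "ainv n - cscale mu 1 = ainv n * cscale (- mu) (n - cscale (1/mu) 1)"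
    proof -
      have "ainv n * cscale (- mu) (n - cscale (1/mu) 1) = cscale (- mu) (ainv n * n) - cscale (- mu * (1/mu)) (ainv n)"
        by (simp add: cscale_mult_right cscale_diff_right mult_cscale_1 cscale_assoc[symmetric] right_diff_distrib)
      also have "\<dots> = ainv n - cscale mu 1" using ainv(2)[OF i] mu by (simp add: cscale_minus_left)
      finally show ?thesis by simp
    qed
    have "invertible_el (ainv n - cscale mu 1)" unfolding eq
      using mu i1 invertible_ainv[OF i] by (intro invertible_mult invertible_cscale) auto
    then show False using ni by simp
  qed
qed

end

context unital_cstar_algebra
begin

lemma construct:
  assumes p: "is_proj star p" and q: "is_proj star q" and P: "is_proj star P"
    and Pp: "P * p = p" and pP: "p * P = p"
    and bdef: "b = (1 - p) * b * (1 - q)" and Tb: "(1 - q) * a * (1 - p) * b = 1 - q"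
    and bT: "b * (1 - q) * a * (1 - p) = 1 - p" and qa: "q * a * (1 - p) = 0"
  shows "\<exists>Q \<tau>. is_proj star Q \<and> is_proj star (Q - q) \<and> proj_equiv star (Q - q) (P - p)
      \<and> invertible_upto a P Q \<and> (1 - Q) * a * (P - p) = 0
      \<and> Q = q + ((1 - q) * a * (P - p)) * \<tau> * star ((1 - q) * a * (P - p))
      \<and> (\<forall>f. norm ((1 - Q) * f) \<le> norm ((1 - q) * a * (1 - p)) * norm ((1 - P) * (b * f)))"
proof -
  have PP: "P * P = P" "star P = P" using P by (auto simp: is_proj_def)
  have pp: "p * p = p" "star p = p" using p by (auto simp: is_proj_def)
  have qq: "q * q = q" "star q = q" using q by (auto simp: is_proj_def)
  define e where "e = P - p"
  define T where "T = (1 - q) * a * (1 - p)"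
  define x where "x = T * e"
  have ee: "e * e = e" by (simp add: e_def algebra_simps PP pp Pp pP)
  have se: "star e = e" by (simp add: e_def star_diff PP pp)
  have pe: "(1 - p) * e = e" by (simp add: e_def algebra_simps pp pP)
  have Pe: "(1 - P) * e = 0" by (simp add: e_def algebra_simps PP Pp)
  have Tp: "T * (1 - p) = T" by (simp add: T_def mult.assoc algebra_simps pp)
  have xalt: "x = (1 - q) * a * e" by (simp add: x_def T_def mult.assoc pe)
  have xe: "x * e = x" by (simp add: x_def mult.assoc ee)
  have q1q: "q * (1 - q) = 0" by (simp add: right_diff_distrib qq)
  have qx: "q * x = 0" by (simp add: xalt mult.assoc[symmetric] q1q)
  have bTT: "b * T = 1 - p" using bT by (simp add: T_def mult.assoc)
  have TbT: "T * b = 1 - q" using Tb by (simp add: T_def mult.assoc)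
  have bx: "b * x = e" by (simp add: x_def mult.assoc[symmetric] bTT pe)
  have ae: "a * e = x"
  proof -
    have "q * a * e = q * a * (1 - p) * e" by (simp add: mult.assoc pe)
    then have "q * a * e = 0" using qa by simp
    then show ?thesis by (simp add: xalt algebra_simps)
  qed
  define K where "K = (norm b)^2 + 1"
  have K: "K > 0" by (simp add: K_def add_nonneg_pos)
  define Kb where "Kb = scaleR K 1 - star b * b"
  have posKb: "pos Kb"
  proof (rule norm_pos)
    show "star Kb = Kb" by (simp add: Kb_def star_diff star_scaleR star_mult star_star)
    show "0 \<le> K" using K by simp
    have "norm (scaleR K 1 - Kb) = (norm b)^2" by (simp add: Kb_def cstar_identity)
    then show "norm (scaleR K 1 - Kb) \<le> K" by (simp add: K_def)
  qed
  obtain sb where ssb: "star sb = sb" and sbsb: "sb * sb = Kb" using pos_sqrt[OF posKb] by blast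
  define w where "w = sb * x"
  have we: "w * e = w" by (simp add: w_def mult.assoc xe)
  have ww: "star w * w = scaleR K (star x * x) - e"
  proof -
    have "star w * w = star x * (sb * sb) * x" by (simp add: w_def star_mult ssb mult.assoc)
    also have "\<dots> = scaleR K (star x * x) - star (b * x) * (b * x)"
      by (simp add: sbsb Kb_def algebra_simps star_mult)
    also have "\<dots> = scaleR K (star x * x) - e" by (simp add: bx se ee)
    finally show ?thesis .
  qed
  have esw: "e * star w = star w" using we by (metis se star_mult)
  define nn where "nn = 1 + star w * w"
  have posnn: "pos nn" unfolding nn_def by (intro pos_add pos_one pos_star_mult)
  have inn: "invertible_el nn"
  proof -
    have "invertible_el (star w * w - cscale (-1) 1)" using pos_spec[OF pos_star_mult, of w "-1"] by auto
    then show ?thesis by (simp add: nn_def cscale_minus_left add.commute)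
  qed
  have en: "e * nn = nn * e" by (simp add: nn_def algebra_simps mult.assoc[symmetric] esw we)
  have en2: "e * nn = e + star w * w" by (simp add: nn_def algebra_simps mult.assoc[symmetric] esw)
  have Ky: "scaleR K (star x * x) = e * nn" using ww en2 by simp
  define m where "m = ainv nn"
  have mn: "m * nn = 1" "nn * m = 1" using ainv[OF inn] by (auto simp: m_def)
  have em: "e * m = m * e" unfolding m_def by (rule comm_ainv[OF inn en])
  have posm: "pos m" unfolding m_def by (rule pos_inv[OF posnn inn])
  obtain r0 where sr0: "star r0 = r0" and r0r0: "r0 * r0 = m"
    and r0c: "\<And>y. y * m = m * y \<Longrightarrow> y * r0 = r0 * y" using pos_sqrt[OF posm] by blast
  have er: "e * r0 = r0 * e" using r0c em by blast
  have nr: "nn * r0 = r0 * nn" using r0c mn by (metis)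
  text \<open>Normalisation rules (order e < r0 < nn).\<close>
  have N1: "r0 * e = e * r0" "r0 * (e * z) = e * (r0 * z)" for z using er by (auto simp: mult.assoc[symmetric])
  have N2: "nn * e = e * nn" "nn * (e * z) = e * (nn * z)" for z using en by (auto simp: mult.assoc[symmetric])
  have N3: "nn * r0 = r0 * nn" "nn * (r0 * z) = r0 * (nn * z)" for z using nr by (auto simp: mult.assoc[symmetric])
  have N4: "e * (e * z) = e * z" "r0 * (r0 * z) = m * z" "m * (nn * z) = z" for z
    using ee r0r0 mn by (auto simp: mult.assoc[symmetric])
  have N5: "m * e = e * m" "m * (e * z) = e * (m * z)" for z using em by (auto simp: mult.assoc[symmetric])
  define t where "t = scaleR (sqrt K) (e * r0)"
  have st: "star t = t" by (simp add: t_def star_scaleR star_mult se sr0 er)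
  have tt: "t * t = scaleR K (e * m)"
  proof -
    have "t * t = scaleR (sqrt K * sqrt K) (e * r0 * (e * r0))" by (simp add: t_def)
    also have "e * r0 * (e * r0) = e * m" by (simp add: mult.assoc N1 N4 ee r0r0)
    finally show ?thesis using K by simp
  qed
  have te: "t * e = t" by (simp add: t_def mult.assoc N1 N4 ee)
  define v where "v = x * t"
  have vv: "star v * v = e"
  proof -
    have "star v * v = t * (star x * x) * t" by (simp add: v_def star_mult st mult.assoc)
    also have "\<dots> = scaleR (sqrt K * sqrt K) ((e * r0) * (star x * x) * (e * r0))" by (simp add: t_def)
    also have "\<dots> = (e * r0) * (scaleR K (star x * x)) * (e * r0)" using K by simp
    also have "\<dots> = (e * r0) * (e * nn) * (e * r0)" by (simp add: Ky)
    also have "\<dots> = e" by (simp add: mult.assoc N1 N2 N3 N4 ee mn)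
    finally show ?thesis .
  qed
  define \<tau> where "\<tau> = scaleR K (e * m)"
  define r where "r = v * star v"
  have ralt: "r = x * \<tau> * star x"
  proof -
    have "r = x * (t * t) * star x" by (simp add: r_def v_def star_mult st mult.assoc)
    then show ?thesis by (simp only: tt \<tau>_def)
  qed
  have ve: "v * e = v" by (simp add: v_def mult.assoc te)
  have rr: "r * r = r" by (simp add: r_def mult.assoc[symmetric] ve) (simp add: mult.assoc vv[unfolded mult.assoc] ve)
  have sr: "star r = r" by (simp add: r_def star_mult star_star)
  have rx: "r * x = x"
  proof -
    have "r * x = x * (scaleR K (e * m) * (star x * x))" by (simp add: ralt \<tau>_def mult.assoc)
    also have "scaleR K (e * m) * (star x * x) = (e * m) * (scaleR K (star x * x))" by simp
    also have "\<dots> = (e * m) * (e * nn)" by (simp add: Ky)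
    also have "\<dots> = e" by (simp add: mult.assoc N5 N4 mn ee)
    also have "x * e = x" by (rule xe)
    finally show ?thesis .
  qed
  have qr: "q * r = 0" by (simp add: ralt mult.assoc[symmetric] qx)
  have rq: "r * q = 0" using qr by (metis sr star_mult qq(2) star_zero)
  define Q where "Q = q + r"
  have projr: "is_proj star r" using rr sr by (simp add: is_proj_def)
  have projQ: "is_proj star Q"
    using qq rr sr qr rq by (simp add: is_proj_def Q_def algebra_simps star_add)
  have Qq: "Q - q = r" by (simp add: Q_def)
  have equiv: "proj_equiv star r e" unfolding proj_equiv_def using vv r_def by blast
  have Qx: "(1 - Q) * x = 0" by (simp add: Q_def algebra_simps qx rx)
  have annih: "(1 - Q) * a * e = 0" by (simp add: mult.assoc ae Qx)
  have Qq1: "(1 - Q) * (1 - q) = 1 - Q" by (simp add: Q_def algebra_simps qq rq)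
  have pP1: "(1 - p) * (1 - P) = 1 - P" by (simp add: algebra_simps pP)
  have Pp1: "(1 - P) * (1 - p) = 1 - P" by (simp add: algebra_simps Pp)
  have PP1: "(1 - P) * (1 - P) = 1 - P" by (simp add: algebra_simps PP)
  have QQ1: "(1 - Q) * (1 - Q) = 1 - Q" using projQ by (simp add: algebra_simps is_proj_def)
  have bq: "b * (1 - q) = b"
  proof -
    have "b * (1 - q) = (1 - p) * b * ((1 - q) * (1 - q))" by (subst bdef) (simp add: mult.assoc)
    also have "(1 - q) * (1 - q) = 1 - q" by (simp add: algebra_simps qq)
    finally show ?thesis using bdef by simp
  qed
  have T': "(1 - Q) * a * (1 - P) = (1 - Q) * T * (1 - P)"
  proof -
    have "(1 - Q) * T * (1 - P) = ((1 - Q) * (1 - q)) * a * ((1 - p) * (1 - P))"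
      by (simp add: T_def mult.assoc)
    then show ?thesis by (simp add: Qq1 pP1)
  qed
  have TP: "T * (1 - P) = T - x"
  proof -
    have h1: "1 - P = (1 - p) - e" by (simp add: e_def)
    have "T * (1 - P) = T * ((1 - p) - e)" by (simp only: h1)
    also have "\<dots> = T * (1 - p) - T * e" by (rule right_diff_distrib)
    also have "\<dots> = T - x" by (simp only: Tp x_def)
    finally show ?thesis .
  qed
  have QTP: "(1 - Q) * T = (1 - Q) * T * (1 - P)"
  proof -
    have "(1 - Q) * T * (1 - P) = (1 - Q) * (T * (1 - P))" by (rule mult.assoc)
    also have "\<dots> = (1 - Q) * (T - x)" by (simp only: TP)
    also have "\<dots> = (1 - Q) * T - (1 - Q) * x" by (rule right_diff_distrib)
    also have "\<dots> = (1 - Q) * T" by (simp only: Qx diff_zero)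
    finally show ?thesis by simp
  qed
  have inv: "invertible_upto a P Q"
    unfolding invertible_upto_def
  proof (intro exI[of _ "(1 - P) * b * (1 - Q)"] conjI)
    show "(1 - P) * b * (1 - Q) = (1 - P) * ((1 - P) * b * (1 - Q)) * (1 - Q)"
      by (simp add: mult.assoc[symmetric] PP1) (simp add: mult.assoc QQ1)
    have "(1 - Q) * a * (1 - P) * ((1 - P) * b * (1 - Q)) = (1 - Q) * T * (1 - P) * b * (1 - Q)"
      by (simp add: T' mult.assoc[symmetric] PP1) (simp add: mult.assoc PP1)
    also have "(1 - Q) * T * (1 - P) = (1 - Q) * T" by (rule QTP[symmetric])
    also have "(1 - Q) * T * b * (1 - Q) = (1 - Q) * (1 - q) * (1 - Q)" by (simp add: mult.assoc TbT)
    also have "\<dots> = 1 - Q" by (simp add: Qq1 QQ1)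
    finally show "(1 - Q) * a * (1 - P) * ((1 - P) * b * (1 - Q)) = 1 - Q" .
    have br: "(1 - P) * (b * r) = 0"
      by (simp add: ralt mult.assoc[symmetric] bx Pe)
    have bQ: "(1 - P) * b * (1 - Q) = (1 - P) * b"
    proof -
      have h: "1 - Q = (1 - q) - r" by (simp add: Q_def)
      have "(1 - P) * b * (1 - Q) = (1 - P) * (b * ((1 - q) - r))" by (simp only: h mult.assoc)
      also have "\<dots> = (1 - P) * (b * (1 - q) - b * r)" by (simp only: right_diff_distrib)
      also have "\<dots> = (1 - P) * (b * (1 - q)) - (1 - P) * (b * r)" by (rule right_diff_distrib)
      also have "\<dots> = (1 - P) * b" by (simp only: bq br diff_zero)
      finally show ?thesis .
    qed
    have "(1 - P) * b * (1 - Q) * ((1 - Q) * a * (1 - P)) = (1 - P) * b * (1 - Q) * ((1 - Q) * T * (1 - P))"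
      by (simp only: T')
    also have "\<dots> = ((1 - P) * b * ((1 - Q) * (1 - Q))) * T * (1 - P)" by (simp add: mult.assoc)
    also have "\<dots> = ((1 - P) * b * (1 - Q)) * T * (1 - P)" by (simp only: QQ1)
    also have "\<dots> = (1 - P) * b * T * (1 - P)" by (simp only: bQ)
    also have "\<dots> = (1 - P) * (b * T) * (1 - P)" by (simp only: mult.assoc)
    also have "\<dots> = 1 - P" by (simp add: bTT mult.assoc[symmetric] Pp1 PP1)
    finally show "(1 - P) * b * (1 - Q) * (1 - Q) * a * (1 - P) = 1 - P" by (simp add: mult.assoc)
  qed
  have nb: "norm ((1 - Q) * f) \<le> norm T * norm ((1 - P) * (b * f))" for f
  proof -
    have "(1 - Q) * f = (1 - Q) * (1 - q) * f" by (simp add: Qq1)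
    also have "\<dots> = (1 - Q) * T * (b * f)" by (simp only: mult.assoc TbT[symmetric])
    also have "\<dots> = (1 - Q) * (T * ((1 - P) * (b * f)))" by (subst QTP) (simp add: mult.assoc)
    finally have "norm ((1 - Q) * f) \<le> norm (1 - Q) * norm (T * ((1 - P) * (b * f)))"
      by (simp add: norm_mult_ineq)
    also have "\<dots> \<le> 1 * (norm T * norm ((1 - P) * (b * f)))"
    proof (intro mult_mono norm_mult_ineq)
      show "norm (1 - Q) \<le> 1"
        by (rule proj_norm_le1) (use projQ in \<open>simp add: is_proj_def algebra_simps star_diff\<close>)
    qed auto
    finally show ?thesis by simp
  qed
  have Qform: "Q = q + ((1 - q) * a * (P - p)) * \<tau> * star ((1 - q) * a * (P - p))"
    by (simp only: Q_def ralt xalt e_def)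
  have ann2: "(1 - Q) * a * (P - p) = 0" using annih by (simp only: e_def)
  have projQq: "is_proj star (Q - q)" using projr Qq by simp
  have eqv: "proj_equiv star (Q - q) (P - p)" using equiv Qq by (simp only: e_def)
  have nb2: "\<forall>f. norm ((1 - Q) * f) \<le> norm ((1 - q) * a * (1 - p)) * norm ((1 - P) * (b * f))"
    using nb unfolding T_def by blast
  show ?thesis
    by (rule exI[of _ Q], rule exI[of _ \<tau>]) (intro conjI projQ projQq eqv inv ann2 Qform nb2)
qed

end

theorem mainTheorem7:
  fixes star :: "'a::{real_normed_algebra_1, banach} \<Rightarrow> 'a"
    and cscale :: "complex \<Rightarrow> 'a \<Rightarrow> 'a"
    and F :: "'a set"
    and I :: "'i set" and le :: "'i \<Rightarrow> 'i \<Rightarrow> bool"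
    and P :: "'i \<Rightarrow> 'a"
    and p q a :: 'a
  assumes "unital_cstar_algebra star cscale"
    and "finite_type_algebra star cscale F"
    and "p \<in> F" "q \<in> F" "is_proj star p" "is_proj star q"
    and "invertible_upto a p q" "q * a * (1 - p) = 0"
    and "directed_set I le" "approx_unit_proj star F I le P"
    and "\<forall>\<alpha>\<in>I. cstar_le star cscale p (P \<alpha>)"
  shows "\<exists>Q :: 'i \<Rightarrow> 'a. approx_unit_proj star F I le Q \<and>
           (\<forall>\<alpha>\<in>I. is_proj star (Q \<alpha> - q) \<and>
                    proj_equiv star (Q \<alpha> - q) (P \<alpha> - p) \<and>
                    invertible_upto a (P \<alpha>) (Q \<alpha>) \<and>
                    (1 - Q \<alpha>) * a * (P \<alpha> - p) = 0)"
proof -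
  interpret unital_cstar_algebra star cscale by fact
  have saF: "sa_ideal star cscale F" using assms(2) by (simp add: finite_type_algebra_def)
  have Fadd: "x \<in> F \<Longrightarrow> y \<in> F \<Longrightarrow> x + y \<in> F" for x y using saF by (simp add: sa_ideal_def)
  have Fml: "x \<in> F \<Longrightarrow> c * x \<in> F" for x c using saF by (simp add: sa_ideal_def)
  have Fmr: "x \<in> F \<Longrightarrow> x * c \<in> F" for x c using saF by (simp add: sa_ideal_def)
  have Fstar: "x \<in> F \<Longrightarrow> star x \<in> F" for x using saF by (simp add: sa_ideal_def)
  have Fneg: "x \<in> F \<Longrightarrow> - x \<in> F" for x
  proof -
    assume "x \<in> F"
    then have "cscale (-1) x \<in> F" using saF by (simp add: sa_ideal_def)
    then show ?thesis by (simp add: cscale_minus_left)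
  qed
  have Fdiff: "x \<in> F \<Longrightarrow> y \<in> F \<Longrightarrow> x - y \<in> F" for x y
    using Fadd[of x "- y"] Fneg[of y] by simp
  obtain b where bdef: "b = (1 - p) * b * (1 - q)" and Tb: "(1 - q) * a * (1 - p) * b = 1 - q"
    and bT: "b * (1 - q) * a * (1 - p) = 1 - p"
    using assms(7) unfolding invertible_upto_def by (elim exE conjE) (rule that)
  have PF: "\<And>\<alpha>. \<alpha> \<in> I \<Longrightarrow> P \<alpha> \<in> F \<and> is_proj star (P \<alpha>)"
    using assms(10) by (simp add: approx_unit_proj_def)
  let ?T = "(1 - q) * a * (1 - p)"
  have ex: "\<forall>\<alpha>\<in>I. \<exists>Qa. is_proj star Qa \<and> Qa \<in> F \<and> is_proj star (Qa - q)
      \<and> proj_equiv star (Qa - q) (P \<alpha> - p) \<and> invertible_upto a (P \<alpha>) Qa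
      \<and> (1 - Qa) * a * (P \<alpha> - p) = 0
      \<and> (\<forall>f. norm ((1 - Qa) * f) \<le> norm ?T * norm ((1 - P \<alpha>) * (b * f)))"
  proof
    fix \<alpha> assume \<alpha>: "\<alpha> \<in> I"
    have Pa: "P \<alpha> \<in> F" "is_proj star (P \<alpha>)" using PF[OF \<alpha>] by auto
    have le: "pos (P \<alpha> - p)" using assms(11) \<alpha> by (simp add: cstar_le_def)
    have Pp: "P \<alpha> * p = p" "p * P \<alpha> = p" using proj_le[OF Pa(2) assms(5) le] by auto
    obtain Qa \<tau> where c: "is_proj star Qa" "is_proj star (Qa - q)" "proj_equiv star (Qa - q) (P \<alpha> - p)"
      "invertible_upto a (P \<alpha>) Qa" "(1 - Qa) * a * (P \<alpha> - p) = 0"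
      "Qa = q + ((1 - q) * a * (P \<alpha> - p)) * \<tau> * star ((1 - q) * a * (P \<alpha> - p))"
      "\<forall>f. norm ((1 - Qa) * f) \<le> norm ?T * norm ((1 - P \<alpha>) * (b * f))"
      using construct[OF assms(5) assms(6) Pa(2) Pp bdef Tb bT assms(8)] by (elim exE conjE) (rule that)
    have X: "(1 - q) * a * (P \<alpha> - p) \<in> F" by (rule Fml[OF Fdiff[OF Pa(1) assms(3)]])
    have QF: "Qa \<in> F" unfolding c(6) by (rule Fadd[OF assms(4) Fmr[OF Fmr[OF X]]])
    show "\<exists>Qa. is_proj star Qa \<and> Qa \<in> F \<and> is_proj star (Qa - q)
      \<and> proj_equiv star (Qa - q) (P \<alpha> - p) \<and> invertible_upto a (P \<alpha>) Qa
      \<and> (1 - Qa) * a * (P \<alpha> - p) = 0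
      \<and> (\<forall>f. norm ((1 - Qa) * f) \<le> norm ?T * norm ((1 - P \<alpha>) * (b * f)))"
      by (rule exI[of _ Qa], intro conjI c(1) QF c(2) c(3) c(4) c(5) c(7))
  qed
  from bchoice[OF ex] obtain Q where Qall: "\<forall>\<alpha>\<in>I. is_proj star (Q \<alpha>) \<and> Q \<alpha> \<in> F \<and> is_proj star (Q \<alpha> - q)
      \<and> proj_equiv star (Q \<alpha> - q) (P \<alpha> - p) \<and> invertible_upto a (P \<alpha>) (Q \<alpha>)
      \<and> (1 - Q \<alpha>) * a * (P \<alpha> - p) = 0
      \<and> (\<forall>f. norm ((1 - Q \<alpha>) * f) \<le> norm ?T * norm ((1 - P \<alpha>) * (b * f)))"
    by (elim exE) (rule that)
  note Q = bspec[OF Qall]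
  note dsd = assms(9)[unfolded directed_set_def]
  note dir = conjunct1[OF conjunct2[OF conjunct2[OF dsd]]] conjunct2[OF conjunct2[OF conjunct2[OF dsd]]]
  have Pall: "\<forall>f\<in>F. \<forall>\<epsilon>>0. \<exists>\<alpha>0\<in>I. \<forall>\<alpha>\<in>I. le \<alpha>0 \<alpha> \<longrightarrow>
         norm (f - P \<alpha> * f) < \<epsilon> \<and> norm (f - f * P \<alpha>) < \<epsilon>"
    using assms(10) unfolding approx_unit_proj_def by (rule conjunct2)
  have Papprox: "\<exists>\<alpha>0\<in>I. \<forall>\<alpha>\<in>I. le \<alpha>0 \<alpha> \<longrightarrow> norm (g - P \<alpha> * g) < \<epsilon>"
    if g: "g \<in> F" and e: "\<epsilon> > 0" for g \<epsilon>
  proof -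
    obtain \<alpha>0 where a0: "\<alpha>0 \<in> I" "\<forall>\<alpha>\<in>I. le \<alpha>0 \<alpha> \<longrightarrow> norm (g - P \<alpha> * g) < \<epsilon> \<and> norm (g - g * P \<alpha>) < \<epsilon>"
    proof -
      have "\<forall>\<epsilon>>0. \<exists>\<alpha>0\<in>I. \<forall>\<alpha>\<in>I. le \<alpha>0 \<alpha> \<longrightarrow> norm (g - P \<alpha> * g) < \<epsilon> \<and> norm (g - g * P \<alpha>) < \<epsilon>"
        by (rule bspec[OF Pall g])
      then have "\<exists>\<alpha>0\<in>I. \<forall>\<alpha>\<in>I. le \<alpha>0 \<alpha> \<longrightarrow> norm (g - P \<alpha> * g) < \<epsilon> \<and> norm (g - g * P \<alpha>) < \<epsilon>"
        using e by simp
      then show ?thesis by (elim bexE) (rule that)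
    qed
    show ?thesis using a0 by (intro bexI[OF _ a0(1)]) simp
  qed
  have approx: "approx_unit_proj star F I le Q"
    unfolding approx_unit_proj_def
  proof (intro conjI ballI allI impI)
    fix \<alpha> assume "\<alpha> \<in> I" then show "Q \<alpha> \<in> F" "is_proj star (Q \<alpha>)" using Q by auto
  next
    fix f and \<epsilon> :: real assume f: "f \<in> F" and e: "0 < \<epsilon>"
    define c where "c = norm ?T + 1"
    have c: "c > 0" by (simp add: c_def add_nonneg_pos)
    have e': "\<epsilon> / c > 0" using e c by simp
    have bf: "b * f \<in> F" "b * star f \<in> F" using f by (auto intro: Fml Fstar)
    obtain \<alpha>1 where a1: "\<alpha>1 \<in> I" "\<forall>\<alpha>\<in>I. le \<alpha>1 \<alpha> \<longrightarrow> norm (b * f - P \<alpha> * (b * f)) < \<epsilon> / c"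
      using Papprox[OF bf(1) e'] by blast
    obtain \<alpha>2 where a2: "\<alpha>2 \<in> I" "\<forall>\<alpha>\<in>I. le \<alpha>2 \<alpha> \<longrightarrow> norm (b * star f - P \<alpha> * (b * star f)) < \<epsilon> / c"
      using Papprox[OF bf(2) e'] by blast
    obtain k where k: "k \<in> I" "le \<alpha>1 k" "le \<alpha>2 k" using dir(2) a1(1) a2(1) by blast
    have bound: "norm ((1 - Q \<alpha>) * g) < \<epsilon>"
      if \<alpha>: "\<alpha> \<in> I" and g: "norm (b * g - P \<alpha> * (b * g)) < \<epsilon> / c" for \<alpha> g
    proof -
      have "norm ((1 - Q \<alpha>) * g) \<le> norm ?T * norm ((1 - P \<alpha>) * (b * g))" using Q[OF \<alpha>] by blast
      also have "(1 - P \<alpha>) * (b * g) = b * g - P \<alpha> * (b * g)" by (simp add: left_diff_distrib)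
      also have "norm ?T * norm (b * g - P \<alpha> * (b * g)) \<le> norm ?T * (\<epsilon> / c)"
        using g by (intro mult_left_mono) auto
      also have "\<dots> < \<epsilon>"
      proof -
        have "norm ?T * (\<epsilon> / c) = \<epsilon> * (norm ?T / c)" by simp
        also have "\<dots> < \<epsilon> * 1" using e c by (intro mult_strict_left_mono) (auto simp: c_def)
        finally show ?thesis by simp
      qed
      finally show ?thesis .
    qed
    show "\<exists>\<alpha>0\<in>I. \<forall>\<alpha>\<in>I. le \<alpha>0 \<alpha> \<longrightarrow> norm (f - Q \<alpha> * f) < \<epsilon> \<and> norm (f - f * Q \<alpha>) < \<epsilon>"
    proof (intro bexI[OF _ k(1)] ballI impI conjI)
      fix \<alpha> assume \<alpha>: "\<alpha> \<in> I" and l: "le k \<alpha>"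
      have l1: "le \<alpha>1 \<alpha>" "le \<alpha>2 \<alpha>" using dir(1) a1(1) a2(1) k \<alpha> l by blast+
      have "norm ((1 - Q \<alpha>) * f) < \<epsilon>" by (rule bound[OF \<alpha>]) (use a1 \<alpha> l1 in auto)
      then show "norm (f - Q \<alpha> * f) < \<epsilon>" by (simp add: left_diff_distrib)
      have "norm ((1 - Q \<alpha>) * star f) < \<epsilon>" by (rule bound[OF \<alpha>]) (use a2 \<alpha> l1 in auto)
      moreover have "star (f - f * Q \<alpha>) = (1 - Q \<alpha>) * star f"
        using Q[OF \<alpha>] by (simp add: star_diff star_mult is_proj_def left_diff_distrib)
      ultimately show "norm (f - f * Q \<alpha>) < \<epsilon>" by (metis norm_star)
    qed
  qed
  show ?thesis
  proof (intro exI[of _ Q] conjI[OF approx] ballI)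
    fix \<alpha> assume \<alpha>: "\<alpha> \<in> I"
    show "is_proj star (Q \<alpha> - q) \<and> proj_equiv star (Q \<alpha> - q) (P \<alpha> - p) \<and>
        invertible_upto a (P \<alpha>) (Q \<alpha>) \<and> (1 - Q \<alpha>) * a * (P \<alpha> - p) = 0"
      using Q[OF \<alpha>] by (elim conjE) (intro conjI; assumption)
  qed
qed


end
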